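(* Given $x \in \mathbb{T}^2$ and $i \in \{1,\dots,M\}$ such that $\mu(\Phi^{\overline{U}}(x,0,t^i_a+s)) \neq 0$ or $\mu(\Phi^{\overline{u}^{\star}(\cdot-S_i, \cdot)}(x+S_i,0,s)) \neq 0$ holds for at least one $s \in [0,T^{\star}]$, it holds \[ \Phi^{\overline{U}}(x,0,t^i_a+t) = \Phi^{\overline{u}^{\star}(\cdot-S_i, \cdot)}(x+S_i,0,t) \] for all $t \in [0, T^{\star}]$.
   Context: $\mathbb{T}^2=\mathbb{R}^2/2\pi\mathbb{Z}^2$, $\omega\subset\mathbb{T}^2$ nonempty open. $\Phi^v(x,s,t)$ denotes the flow of a vector field $v$: $\frac{d}{dt}\Phi^v(x,s,t)=v(\Phi^v(x,s,t),t)$, $\Phi^v(x,s,s)=x$. A length $L>0$ (depending on $\omega$) is fixed with: an open covering of $\mathbb{T}^2$ by squares $\mathcal{O}_1,\dots,\mathcal{O}_M$ of side $L$; an open square $\mathcal{O}$ with $\overline{\mathcal{O}}\subset\omega$ and shifts $S_i\in\mathbb{R}^2$ with $\mathcal{O}=\mathcal{O}_i+S_i$; a cutoff $\mu\in C^\infty(\mathbb{T}^2;[0,1])$ with $\operatorname{supp}\mu\subset\mathcal{O}$ and $\sum_i\mu(\cdot+S_i)=1$; a cutoff $\chi\in C^\infty(\mathbb{T}^2)$ with $\operatorname{supp}\chi\subset\omega$, $\chi=1$ near $\overline{\mathcal{O}}$; and times $T^\star=1/(3M+2)$ and $0<t^0_c<t^1_a<t^1_b<t^1_c<\dots<t^M_c<1$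 equidistant with spacing $T^\star$. $\overline{y}\in C_0^\infty((0,1);C^\infty(\mathbb{T}^2;\mathbb{R}^2))$ is a divergence-free field vanishing on $[t^i_a,t^i_b]$ for all $i$, whose flow satisfies $\Phi^{\overline{y}}(x,0,[t^i_a,t^i_b])=\{x+S_i\}$ whenever $\operatorname{dist}(x,\mathcal{O}_i)<L$, and which is odd-in-time about the midpoints of $[t^{i-1}_c,t^i_c]$. $\overline{u}^\star=\nabla^\perp\overline{\phi}^\star$ on $[0,T^\star]$ is a divergence-free field with stream function $\overline{\phi}^\star$ in $\operatorname{span}\{\sin x_1,\sin x_2,\cos x_1,\cos x_2\}$ at each time, time-reversal symmetric about $T^\star/2$, and so small (via a parameter $\kappa$) that there is $r\in(0,L)$ with $\chi=1$ on the $r$-neighborhood $\mathcal{N}_r$ of $\mathcal{O}$, $\mathcal{N}_r$ containing all flow images $\Phi^{\nabla^\perp[\chi\overline{\phi}^\star(\cdot-S,\cdot)]}(\operatorname{supp}\mu,s,t)$ and $\Phi^{\overline{u}^\star(\cdot-S,\cdot)}(\operatorname{supp}\mu,s,t)$ ($s,t\in[0,T^\star]$, $S\in\mathbb{R}^2$). Finally $\overline{U}(x,t)=\overline{y}(x,t)+\sum_{i=1}^M\mathbb{I}_{[t^i_a,t^i_b]}(t)\nabla^\perp[\chi(x)\overline{\phi}^\star(x-S_i,t-t^i_a)]$. *)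

theory Defs
  imports "HOL-Analysis.Analysis"
begin

text \<open>The torus T^2 = R^2 / 2 pi Z^2 is modelled by its lift R^2 (type real^2):
  functions on T^2 are 2 pi Z^2-periodic functions on R^2, subsets of T^2 are
  lattice-invariant subsets of R^2, and equality of points of T^2 is congruence
  modulo the lattice.\<close>

definition lat2 :: "(real^2) set" where
  "lat2 = {v. \<forall>j. \<exists>m::int. v $ j = 2 * pi * of_int m}"

definition torus_eq :: "real^2 \<Rightarrow> real^2 \<Rightarrow> bool" where
  "torus_eq x y \<longleftrightarrow> x - y \<in> lat2"

definition periodic_fun :: "(real^2 \<Rightarrow> 'b) \<Rightarrow> bool" where
  "periodic_fun f \<longleftrightarrow> (\<forall>x v. v \<in> lat2 \<longrightarrow> f (x + v) = f x)"

definition periodic_set :: "(real^2) set \<Rightarrow> bool" where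
  "periodic_set A \<longleftrightarrow> (\<forall>x v. v \<in> lat2 \<longrightarrow> (x + v \<in> A \<longleftrightarrow> x \<in> A))"

definition tsquare :: "real^2 \<Rightarrow> real \<Rightarrow> (real^2) set" where
  "tsquare c L = {x. \<exists>v\<in>lat2. x + v \<in> box c (c + (\<chi> j. L))}"

definition supp :: "(real^2 \<Rightarrow> 'b::zero) \<Rightarrow> (real^2) set" where
  "supp f = closure {x. f x \<noteq> 0}"

fun iter_dd :: "'a::real_normed_vector list \<Rightarrow> ('a \<Rightarrow> 'b::real_normed_vector) \<Rightarrow> 'a \<Rightarrow> 'b" where
  "iter_dd [] f = f"
| "iter_dd (v # vs) f = (\<lambda>x. frechet_derivative (iter_dd vs f) (at x) v)"

definition smooth_fun :: "('a::real_normed_vector \<Rightarrow> 'b::real_normed_vector) \<Rightarrow> bool" where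
  "smooth_fun f \<longleftrightarrow> (\<forall>vs x. iter_dd vs f differentiable (at x))"

definition pd :: "(real^2 \<Rightarrow> real) \<Rightarrow> 2 \<Rightarrow> real^2 \<Rightarrow> real" where
  "pd f k x = frechet_derivative f (at x) (axis k 1)"

definition perp_grad :: "(real^2 \<Rightarrow> real) \<Rightarrow> real^2 \<Rightarrow> real^2" where
  "perp_grad f x = (\<chi> j. if j = 1 then - pd f 2 x else pd f 1 x)"

definition divergence :: "(real^2 \<Rightarrow> real^2) \<Rightarrow> real^2 \<Rightarrow> real" where
  "divergence v x = pd (\<lambda>y. v y $ 1) 1 x + pd (\<lambda>y. v y $ 2) 2 x"

text \<open>Flow of a time-dependent vector field v on a time interval I, in the (Caratheodory)
  integral sense: phi(t) = x + int_s^t v(phi(r), r) dr for all t in I.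
  flow I v x s t is the value at time t of the (unique) solution through x at time s.\<close>
definition is_sol :: "real set \<Rightarrow> (real^2 \<Rightarrow> real \<Rightarrow> real^2) \<Rightarrow> real^2 \<Rightarrow> real \<Rightarrow> (real \<Rightarrow> real^2) \<Rightarrow> bool" where
  "is_sol I v x s \<phi> \<longleftrightarrow> s \<in> I \<and> (\<forall>t\<in>I.
      (s \<le> t \<longrightarrow> ((\<lambda>r. v (\<phi> r) r) has_integral (\<phi> t - x)) {s..t}) \<and>
      (t \<le> s \<longrightarrow> ((\<lambda>r. v (\<phi> r) r) has_integral (x - \<phi> t)) {t..s}))"

definition flow :: "real set \<Rightarrow> (real^2 \<Rightarrow> real \<Rightarrow> real^2) \<Rightarrow> real^2 \<Rightarrow> real \<Rightarrow> real \<Rightarrow> real^2" where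
  "flow I v x s t = (THE y. \<exists>\<phi>. is_sol I v x s \<phi> \<and> \<phi> t = y)"

end

theory Submission
  imports Defs
begin


lemma expint:
  fixes c a t :: real
  assumes "0 < c" "a \<le> t"
  shows "((\<lambda>r. exp (c * (r - a))) has_integral (exp (c * (t - a)) - 1) / c) {a..t}"
proof -
  have "((\<lambda>r. exp (c * (r - a))) has_integral ((\<lambda>r. exp (c * (r - a)) / c) t - (\<lambda>r. exp (c * (r - a)) / c) a)) {a..t}"
    apply (rule fundamental_theorem_of_calculus[OF assms(2)])
    using assms(1) by (auto intro!: derivative_eq_intros simp: has_real_derivative_iff_has_vector_derivative[symmetric])
  then show ?thesis by (simp add: diff_divide_distrib)
qed

definition sol2 :: "real set \<Rightarrow> (real^2 \<Rightarrow> real \<Rightarrow> real^2) \<Rightarrow> (real \<Rightarrow> real^2) \<Rightarrow> bool" where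
  "sol2 I v \<phi> \<longleftrightarrow> (\<forall>p q. p \<in> I \<longrightarrow> q \<in> I \<longrightarrow> p \<le> q \<longrightarrow>
      ((\<lambda>r. v (\<phi> r) r) has_integral (\<phi> q - \<phi> p)) {p..q})"

lemma is_sol_start: "is_sol I v x s \<phi> \<Longrightarrow> \<phi> s = x"
proof -
  assume a: "is_sol I v x s \<phi>"
  then have "((\<lambda>r. v (\<phi> r) r) has_integral (\<phi> s - x)) {s..s}" unfolding is_sol_def by auto
  moreover have "((\<lambda>r. v (\<phi> r) r) has_integral 0) {s..s}" using has_integral_refl(2) by simp
  ultimately have "\<phi> s - x = 0" using has_integral_unique by blast
  then show ?thesis by simp
qed

lemma sub_has_integral:
  fixes g :: "real \<Rightarrow> real^2"
  assumes "(g has_integral A) {a..b}" "(g has_integral C) {a..c}" "a \<le> c" "c \<le> b"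
  shows "(g has_integral (A - C)) {c..b}"
proof -
  have ib: "g integrable_on {a..b}" using assms(1) by blast
  have i: "g integrable_on {c..b}" by (rule integrable_subinterval_real[OF ib]) (use assms in auto)
  have "integral {a..c} g + integral {c..b} g = integral {a..b} g"
    by (rule Henstock_Kurzweil_Integration.integral_combine[OF assms(3,4) ib])
  moreover have "integral {a..b} g = A" "integral {a..c} g = C"
    using assms(1,2) by (auto intro: integral_unique)
  ultimately have "integral {c..b} g = A - C" by (simp add: algebra_simps)
  then show ?thesis using i by (metis has_integral_integral)
qed

lemma sub_has_integral2:
  fixes g :: "real \<Rightarrow> real^2"
  assumes "(g has_integral A) {a..b}" "(g has_integral C) {c..b}" "a \<le> c" "c \<le> b"
  shows "(g has_integral (A - C)) {a..c}"
proof -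
  have ib: "g integrable_on {a..b}" using assms(1) by blast
  have i: "g integrable_on {a..c}" by (rule integrable_subinterval_real[OF ib]) (use assms in auto)
  have "integral {a..c} g + integral {c..b} g = integral {a..b} g"
    by (rule Henstock_Kurzweil_Integration.integral_combine[OF assms(3,4) ib])
  moreover have "integral {a..b} g = A" "integral {c..b} g = C"
    using assms(1,2) by (auto intro: integral_unique)
  ultimately have "integral {a..c} g = A - C" by (simp add: algebra_simps)
  then show ?thesis using i by (metis has_integral_integral)
qed

lemma is_sol_sol2:
  assumes "is_sol I v x s \<phi>" "is_interval I"
  shows "sol2 I v \<phi>"
  unfolding sol2_def
proof (intro allI impI)
  fix p q assume pq: "p \<in> I" "q \<in> I" "p \<le> q"
  have s: "s \<in> I" and x: "\<phi> s = x" using assms is_sol_start unfolding is_sol_def by auto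
  have P: "\<And>t. t \<in> I \<Longrightarrow> s \<le> t \<Longrightarrow> ((\<lambda>r. v (\<phi> r) r) has_integral (\<phi> t - x)) {s..t}"
   and Q: "\<And>t. t \<in> I \<Longrightarrow> t \<le> s \<Longrightarrow> ((\<lambda>r. v (\<phi> r) r) has_integral (x - \<phi> t)) {t..s}"
    using assms(1) unfolding is_sol_def by auto
  consider "s \<le> p" | "q \<le> s" | "p \<le> s" "s \<le> q" using pq by linarith
  then show "((\<lambda>r. v (\<phi> r) r) has_integral (\<phi> q - \<phi> p)) {p..q}"
  proof cases
    case 1
    from sub_has_integral[OF P[OF pq(2)] P[OF pq(1)] 1 pq(3)] 1 pq show ?thesis by simp
  next
    case 2
    from sub_has_integral2[OF Q[OF pq(1)] Q[OF pq(2)] pq(3) 2] 2 pq show ?thesis by simp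
  next
    case 3
    have "((\<lambda>r. v (\<phi> r) r) has_integral ((x - \<phi> p) + (\<phi> q - x))) {p..q}"
      by (rule has_integral_combine[OF 3 Q[OF pq(1) 3(1)] P[OF pq(2) 3(2)]])
    then show ?thesis by simp
  qed
qed

lemma sol2_is_sol:
  assumes "sol2 I v \<phi>" "s \<in> I"
  shows "is_sol I v (\<phi> s) s \<phi>"
  using assms unfolding sol2_def is_sol_def by auto

lemma sol2_mono: "sol2 I v \<phi> \<Longrightarrow> J \<subseteq> I \<Longrightarrow> sol2 J v \<phi>"
  unfolding sol2_def by blast

lemma sol2_cong:
  assumes "sol2 I v \<phi>" "is_interval I" "\<And>t. t \<in> I \<Longrightarrow> v (\<phi> t) t = w (\<phi> t) t"
  shows "sol2 I w \<phi>"
  unfolding sol2_def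
proof (intro allI impI)
  fix p q assume pq: "p \<in> I" "q \<in> I" "p \<le> q"
  have sub: "{p..q} \<subseteq> I" using assms(2) pq
    by (metis atLeastAtMost_iff is_interval_1 subsetI)
  show "((\<lambda>r. w (\<phi> r) r) has_integral (\<phi> q - \<phi> p)) {p..q}"
    using assms(1) pq unfolding sol2_def
    by (subst has_integral_cong[where g="\<lambda>r. v (\<phi> r) r"]) (use sub assms(3) in auto)
qed


lemma sol2_cont:
  assumes "sol2 {a..e} v \<phi>" "a \<le> e"
  shows "continuous_on {a..e} \<phi>"
proof -
  have H: "\<And>t. t \<in> {a..e} \<Longrightarrow> ((\<lambda>r. v (\<phi> r) r) has_integral (\<phi> t - \<phi> a)) {a..t}"
    using assms unfolding sol2_def by auto
  have ie: "(\<lambda>r. v (\<phi> r) r) integrable_on {a..e}" using H[of e] assms(2) by auto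
  have c: "continuous_on {a..e} (\<lambda>t. \<phi> a + integral {a..t} (\<lambda>r. v (\<phi> r) r))"
    by (rule continuous_on_add[OF continuous_on_const indefinite_integral_continuous_1[OF ie]])
  have eq: "\<phi> a + integral {a..t} (\<lambda>r. v (\<phi> r) r) = \<phi> t" if "t \<in> {a..e}" for t
  proof -
    have "integral {a..t} (\<lambda>r. v (\<phi> r) r) = \<phi> t - \<phi> a" by (rule integral_unique[OF H[OF that]])
    then show ?thesis by simp
  qed
  show ?thesis by (rule continuous_on_eq[OF c eq])
qed

lemma uniq_fwd:
  assumes ae: "a \<le> e" and K: "0 < K"
    and lip: "\<And>t p q. t \<in> {a..e} \<Longrightarrow> norm (v p t - v q t) \<le> K * norm (p - q)"
    and s1: "sol2 {a..e} v \<phi>" and s2: "sol2 {a..e} v \<psi>" and st: "\<phi> a = \<psi> a"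
    and t: "t \<in> {a..e}"
  shows "\<phi> t = \<psi> t"
proof -
  define \<delta> where "\<delta> t = exp (- (2*K) * (t - a)) * norm (\<phi> t - \<psi> t)" for t
  have c1: "continuous_on {a..e} \<phi>" and c2: "continuous_on {a..e} \<psi>"
    using sol2_cont s1 s2 ae by auto
  have cd: "continuous_on {a..e} \<delta>" unfolding \<delta>_def
    by (intro continuous_intros c1 c2)
  obtain t0 where t0: "t0 \<in> {a..e}" "\<And>t. t \<in> {a..e} \<Longrightarrow> \<delta> t \<le> \<delta> t0"
    using continuous_attains_sup[OF compact_Icc _ cd] ae by auto
  define D where "D = \<delta> t0"
  have D0: "0 \<le> D" unfolding D_def \<delta>_def by simp
  have H1: "\<And>t. t \<in> {a..e} \<Longrightarrow> ((\<lambda>r. v (\<phi> r) r) has_integral (\<phi> t - \<phi> a)) {a..t}"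
    using s1 unfolding sol2_def by auto
  have H2: "\<And>t. t \<in> {a..e} \<Longrightarrow> ((\<lambda>r. v (\<psi> r) r) has_integral (\<psi> t - \<psi> a)) {a..t}"
    using s2 unfolding sol2_def by auto
  have bound: "\<delta> t \<le> D / 2" if tt: "t \<in> {a..e}" for t
  proof -
    have hd: "((\<lambda>r. v (\<phi> r) r - v (\<psi> r) r) has_integral (\<phi> t - \<psi> t)) {a..t}"
      using has_integral_diff[OF H1[OF tt] H2[OF tt]] st by simp
    have he: "((\<lambda>r. K * D * exp ((2*K) * (r - a))) has_integral K * D * ((exp ((2*K) * (t - a)) - 1) / (2*K))) {a..t}"
      using has_integral_mult_right[OF expint[of "2*K" a t], of "K * D"] K tt by simp
    have pw: "norm (v (\<phi> r) r - v (\<psi> r) r) \<le> K * D * exp ((2*K) * (r - a))" if r: "r \<in> {a..t}" for r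
    proof -
      have r': "r \<in> {a..e}" using r tt by auto
      have "norm (v (\<phi> r) r - v (\<psi> r) r) \<le> K * norm (\<phi> r - \<psi> r)" using lip[OF r'] .
      also have "norm (\<phi> r - \<psi> r) = exp ((2*K) * (r - a)) * \<delta> r"
      proof -
        have "exp ((2*K) * (r - a)) * exp (- (2*K) * (r - a)) = 1"
          by (simp add: exp_add[symmetric])
        then show ?thesis unfolding \<delta>_def by (simp only: mult.assoc[symmetric] mult_1)
      qed
      also have "\<dots> \<le> exp ((2*K) * (r - a)) * D" unfolding D_def using t0(2)[OF r'] by simp
      finally show ?thesis using K by (simp add: mult_left_mono algebra_simps)
    qed
    have "norm (\<phi> t - \<psi> t) \<le> K * D * ((exp ((2*K) * (t - a)) - 1) / (2*K))"
    proof -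
      have "norm (integral {a..t} (\<lambda>r. v (\<phi> r) r - v (\<psi> r) r)) \<le> integral {a..t} (\<lambda>r. K * D * exp ((2*K) * (r - a)))"
        by (rule integral_norm_bound_integral[OF has_integral_integrable[OF hd] has_integral_integrable[OF he] pw])
      then show ?thesis using integral_unique[OF hd] integral_unique[OF he] by simp
    qed
    also have "\<dots> \<le> D * exp ((2*K) * (t - a)) / 2"
    proof -
      have "K * D * ((exp ((2*K) * (t - a)) - 1) / (2*K)) = D * (exp ((2*K) * (t - a)) - 1) / 2"
        using K by simp
      then show ?thesis using D0 by (simp add: divide_right_mono mult_left_mono)
    qed
    finally have "norm (\<phi> t - \<psi> t) \<le> D * exp ((2*K) * (t - a)) / 2" .
    then have "exp (- (2*K) * (t - a)) * norm (\<phi> t - \<psi> t) \<le> exp (- (2*K) * (t - a)) * (D * exp ((2*K) * (t - a)) / 2)"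
      by (simp add: mult_left_mono)
    also have "\<dots> = D / 2"
    proof -
      have "exp (- (2*K) * (t - a)) * exp ((2*K) * (t - a)) = 1"
        by (simp add: exp_add[symmetric])
      moreover have "exp (- (2*K) * (t - a)) * (D * exp ((2*K) * (t - a)) / 2) = D / 2 * (exp (- (2*K) * (t - a)) * exp ((2*K) * (t - a)))"
        by (simp only: mult_ac times_divide_eq_right times_divide_eq_left)
      ultimately show ?thesis by simp
    qed
    finally show ?thesis unfolding \<delta>_def .
  qed
  have "D \<le> D / 2" using bound[OF t0(1)] unfolding D_def .
  then have "D = 0" using D0 by simp
  then have "\<delta> t \<le> 0" using t0(2)[OF t] D_def by simp
  then have "norm (\<phi> t - \<psi> t) = 0" unfolding \<delta>_def
    by (simp add: mult_le_0_iff)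
  then show ?thesis by simp
qed

lemma sol2_reflect:
  assumes "sol2 {a..e} v \<phi>"
  shows "sol2 {-e..-a} (\<lambda>p t. - v p (-t)) (\<lambda>t. \<phi> (-t))"
  unfolding sol2_def
proof (intro allI impI)
  fix p q :: real assume pq: "p \<in> {-e..-a}" "q \<in> {-e..-a}" "p \<le> q"
  have "((\<lambda>r. v (\<phi> r) r) has_integral (\<phi> (-p) - \<phi> (-q))) {-q..-p}"
    using assms pq unfolding sol2_def by auto
  then have "((\<lambda>r. v (\<phi> (-r)) (-r)) has_integral (\<phi> (-p) - \<phi> (-q))) {-(-p)..-(-q)}"
    by (subst has_integral_reflect_real)
  then have "((\<lambda>r. v (\<phi> (-r)) (-r)) has_integral (\<phi> (-p) - \<phi> (-q))) {p..q}" by simp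
  from has_integral_neg[OF this]
  show "((\<lambda>r. - v (\<phi> (- r)) (- r)) has_integral (\<phi> (- q) - \<phi> (- p))) {p..q}" by simp
qed

lemma uniq_bwd:
  assumes ae: "a \<le> e" and K: "0 < K"
    and lip: "\<And>t p q. t \<in> {a..e} \<Longrightarrow> norm (v p t - v q t) \<le> K * norm (p - q)"
    and s1: "sol2 {a..e} v \<phi>" and s2: "sol2 {a..e} v \<psi>" and st: "\<phi> e = \<psi> e"
    and t: "t \<in> {a..e}"
  shows "\<phi> t = \<psi> t"
proof -
  have lip': "norm ((\<lambda>p t. - v p (-t)) p t - (\<lambda>p t. - v p (-t)) q t) \<le> K * norm (p - q)"
    if "t \<in> {-e..-a}" for t p q
  proof -
    have "-t \<in> {a..e}" using that by auto
    from lip[OF this, of p q] show ?thesis by (simp add: norm_minus_commute[of "v p (-t)"] )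
  qed
  have "(\<lambda>t. \<phi> (-t)) (-t) = (\<lambda>t. \<psi> (-t)) (-t)"
    by (rule uniq_fwd[of "-e" "-a" K, OF _ K lip' sol2_reflect[OF s1] sol2_reflect[OF s2]]) (use ae st t in auto)
  then show ?thesis by simp
qed

lemma uniq:
  assumes I: "is_interval I" and K: "0 < K"
    and lip: "\<And>t p q. t \<in> I \<Longrightarrow> norm (v p t - v q t) \<le> K * norm (p - q)"
    and s1: "sol2 I v \<phi>" and s2: "sol2 I v \<psi>" and s: "s \<in> I" and st: "\<phi> s = \<psi> s"
    and t: "t \<in> I"
  shows "\<phi> t = \<psi> t"
proof (cases "s \<le> t")
  case True
  have sub: "{s..t} \<subseteq> I" using I s t by (metis atLeastAtMost_iff is_interval_1 subsetI)
  show ?thesis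
    by (rule uniq_fwd[OF True K _ sol2_mono[OF s1 sub] sol2_mono[OF s2 sub] st]) (use lip sub True in auto)
next
  case False
  then have ts: "t \<le> s" by simp
  have sub: "{t..s} \<subseteq> I" using I s t by (metis atLeastAtMost_iff is_interval_1 subsetI)
  show ?thesis
    by (rule uniq_bwd[OF ts K _ sol2_mono[OF s1 sub] sol2_mono[OF s2 sub] st]) (use lip sub ts in auto)
qed

lemma flow_eq:
  assumes I: "is_interval I" and K: "0 < K"
    and lip: "\<And>t p q. t \<in> I \<Longrightarrow> norm (v p t - v q t) \<le> K * norm (p - q)"
    and sol: "is_sol I v x s \<phi>" and t: "t \<in> I"
  shows "flow I v x s t = \<phi> t"
  unfolding flow_def
proof (rule the_equality)
  show "\<exists>\<psi>. is_sol I v x s \<psi> \<and> \<psi> t = \<phi> t" using sol by blast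
next
  fix y assume "\<exists>\<psi>. is_sol I v x s \<psi> \<and> \<psi> t = y"
  then obtain \<psi> where ps: "is_sol I v x s \<psi>" "\<psi> t = y" by blast
  have s: "s \<in> I" using sol unfolding is_sol_def by auto
  have e1: "\<psi> s = x" by (rule is_sol_start[OF ps(1)])
  have e2: "\<phi> s = x" by (rule is_sol_start[OF sol])
  have e3: "\<psi> s = \<phi> s" using e1 e2 by simp
  have "\<psi> t = \<phi> t"
    by (rule uniq[OF I K lip is_sol_sol2[OF ps(1) I] is_sol_sol2[OF sol I] s e3 t])
  then show "y = \<phi> t" using ps by simp
qed


lemma geom_zero:
  fixes a M :: real
  assumes "0 \<le> a" "\<And>n. a \<le> M * (1/2)^n"
  shows "a = 0"
proof (rule ccontr)
  assume "a \<noteq> 0" then have a: "0 < a" using assms(1) by simp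
  then have M: "0 < M" using assms(2)[of 0] by simp
  obtain n where n: "(1/2::real)^n < a / M" using real_arch_pow_inv[of "a/M" "1/2"] a M by auto
  then have "M * (1/2)^n < a" using M by (simp add: field_simps)
  with assms(2)[of n] show False by simp
qed

lemma geom_small:
  fixes M e :: real
  assumes "0 < e"
  shows "\<exists>n. M * (1/2)^n \<le> e"
proof (cases "M \<le> 0")
  case True then show ?thesis using assms by (intro exI[of _ 0]) simp
next
  case False
  obtain n where n: "(1/2::real)^n < e / M" using real_arch_pow_inv[of "e/M" "1/2"] assms False by auto
  then have "M * (1/2)^n < e" using False by (simp add: field_simps)
  then show ?thesis by (intro exI[of _ n]) simp
qed

primrec pic :: "(real^2 \<Rightarrow> real \<Rightarrow> real^2) \<Rightarrow> real^2 \<Rightarrow> real \<Rightarrow> nat \<Rightarrow> real \<Rightarrow> real^2" where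
  "pic v x s 0 = (\<lambda>t. x)"
| "pic v x s (Suc n) = (\<lambda>t. x + integral {s..t} (\<lambda>r. v (pic v x s n r) r))"

lemma exist_fwd:
  fixes v :: "real^2 \<Rightarrow> real \<Rightarrow> real^2"
  assumes K: "0 < K"
    and lip: "\<And>t p q. s \<le> t \<Longrightarrow> norm (v p t - v q t) \<le> K * norm (p - q)"
    and bnd: "\<And>t. s \<le> t \<Longrightarrow> norm (v x t) \<le> B"
    and int: "\<And>\<phi> T. s \<le> T \<Longrightarrow> continuous_on {s..T} \<phi> \<Longrightarrow> (\<lambda>r. v (\<phi> r) r) integrable_on {s..T}"
  shows "\<exists>\<phi>. \<phi> s = x \<and> (\<forall>t. s \<le> t \<longrightarrow> ((\<lambda>r. v (\<phi> r) r) has_integral (\<phi> t - x)) {s..t})"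
proof -
  define P where "P = pic v x s"
  define E where "E t = exp ((2*K) * (t - s))" for t
  have B0: "0 \<le> B" using bnd[of s] norm_ge_zero[of "v x s"] by linarith
  define C where "C = B / (2*K)"
  have C0: "0 \<le> C" unfolding C_def using B0 K by simp
  have E1: "1 \<le> E t" if "s \<le> t" for t unfolding E_def using that K by simp
  have Emono: "E r \<le> E t" if "r \<le> t" for r t unfolding E_def using that K by simp
  have cont: "continuous_on {s..T} (P n)" if "s \<le> T" for n T
  proof (induction n)
    case 0 then show ?case unfolding P_def by (simp add: continuous_on_const)
  next
    case (Suc n)
    have "(\<lambda>r. v (P n r) r) integrable_on {s..T}" by (rule int[OF that Suc])
    then show ?case unfolding P_def
      by (simp only: pic.simps) (rule continuous_on_add[OF continuous_on_const indefinite_integral_continuous_1])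
  qed
  have intg: "(\<lambda>r. v (P n r) r) integrable_on {s..T}" if "s \<le> T" for n T
    by (rule int[OF that cont[OF that]])
  have Psuc: "P (Suc n) t = x + integral {s..t} (\<lambda>r. v (P n r) r)" for n t
    unfolding P_def by simp
  have bound: "norm (P (Suc n) t - P n t) \<le> C * (1/2)^n * E t" if "s \<le> t" for n t
    using that
  proof (induction n arbitrary: t)
    case 0
    have i0: "(\<lambda>r. v x r) integrable_on {s..t}" using intg[OF 0, of 0] unfolding P_def by simp
    have "norm (integral {s..t} (\<lambda>r. v x r)) \<le> integral {s..t} (\<lambda>r. B)"
      by (rule integral_norm_bound_integral[OF i0]) (use bnd in auto)
    also have "\<dots> = B * (t - s)" using 0 by simp
    also have "\<dots> = C * ((2*K) * (t - s))" unfolding C_def using K by simp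
    also have "\<dots> \<le> C * E t"
    proof -
      have "(2*K) * (t - s) \<le> exp ((2*K) * (t - s))"
        using exp_ge_add_one_self[of "(2*K) * (t - s)"] by linarith
      then show ?thesis unfolding E_def using C0 by (rule mult_left_mono)
    qed
    finally show ?case unfolding P_def by simp
  next
    case (Suc n)
    have i1: "(\<lambda>r. v (P (Suc n) r) r) integrable_on {s..t}" by (rule intg[OF Suc.prems])
    have i2: "(\<lambda>r. v (P n r) r) integrable_on {s..t}" by (rule intg[OF Suc.prems])
    have eq: "P (Suc (Suc n)) t - P (Suc n) t = integral {s..t} (\<lambda>r. v (P (Suc n) r) r - v (P n r) r)"
      unfolding Psuc[of "Suc n" t] Psuc[of n t] using integral_diff[OF i1 i2] by simp
    have he: "((\<lambda>r. K * (C * (1/2)^n) * exp ((2*K) * (r - s))) has_integral K * (C * (1/2)^n) * ((exp ((2*K) * (t - s)) - 1) / (2*K))) {s..t}"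
      using has_integral_mult_right[OF expint[of "2*K" s t], of "K * (C * (1/2)^n)"] K Suc.prems by simp
    have pw: "norm (v (P (Suc n) r) r - v (P n r) r) \<le> K * (C * (1/2)^n) * exp ((2*K) * (r - s))"
      if r: "r \<in> {s..t}" for r
    proof -
      have "norm (v (P (Suc n) r) r - v (P n r) r) \<le> K * norm (P (Suc n) r - P n r)"
        using lip r by auto
      also have "\<dots> \<le> K * (C * (1/2)^n * E r)"
        using Suc.IH[of r] r K by (simp add: mult_left_mono)
      finally show ?thesis unfolding E_def by (simp add: mult_ac)
    qed
    have "norm (P (Suc (Suc n)) t - P (Suc n) t) \<le> K * (C * (1/2)^n) * ((exp ((2*K) * (t - s)) - 1) / (2*K))"
    proof -
      have "norm (integral {s..t} (\<lambda>r. v (P (Suc n) r) r - v (P n r) r)) \<le> integral {s..t} (\<lambda>r. K * (C * (1/2)^n) * exp ((2*K) * (r - s)))"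
        by (rule integral_norm_bound_integral[OF integrable_diff[OF i1 i2] has_integral_integrable[OF he] pw])
      then show ?thesis using eq integral_unique[OF he] by simp
    qed
    also have "\<dots> = C * (1/2)^(Suc n) * (exp ((2*K) * (t - s)) - 1)"
      using K by simp
    also have "\<dots> \<le> C * (1/2)^(Suc n) * E t"
      unfolding E_def using C0 by (intro mult_left_mono) auto
    finally show ?case .
  qed
  have Ps: "P n s = x" for n
    by (cases n) (simp_all add: P_def)
  define d where "d t n = P (Suc n) t - P n t" for t n
  have sumd: "summable (d t)" if "s \<le> t" for t
  proof -
    have sg: "summable (\<lambda>n. (C * E t) * (1/2::real)^n)"
      by (rule summable_mult) (rule summable_geometric, simp)
    have bn: "norm (norm (d t n)) \<le> (C * E t) * (1/2)^n" for n
    proof -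
      have eq: "C * (1/2::real)^n * E t = (C * E t) * (1/2)^n" by (simp only: mult_ac)
      have nn: "norm (norm (d t n)) = norm (P (Suc n) t - P n t)" unfolding d_def by simp
      show ?thesis unfolding nn using bound[OF that, of n] eq by linarith
    qed
    have "summable (\<lambda>n. norm (d t n))"
      by (rule summable_comparison_test[OF _ sg]) (intro exI[of _ 0] allI impI bn)
    then show ?thesis by (rule summable_norm_cancel)
  qed
  define \<phi> where "\<phi> t = x + suminf (d t)" for t
  have tail: "norm (\<phi> t - P n t) \<le> 2 * C * E t * (1/2)^n" if st: "s \<le> t" for t n
  proof -
    have tel0: "(\<Sum>i<n. d t i) = P n t - P 0 t" unfolding d_def by (rule sum_lessThan_telescope)
    have p0: "P 0 t = x" by (simp add: P_def)
    have tel: "P n t = x + (\<Sum>i<n. d t i)" unfolding tel0 p0 by simp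
    have "\<phi> t - P n t = (\<Sum>k. d t (k + n))"
      unfolding \<phi>_def tel using suminf_split_initial_segment[OF sumd[OF st], of n] by simp
    moreover
    have sg: "summable (\<lambda>k. (C * E t * (1/2)^n) * (1/2::real)^k)"
      by (rule summable_mult) (rule summable_geometric, simp)
    have bk: "norm (d t (k + n)) \<le> (C * E t * (1/2)^n) * (1/2::real)^k" for k
    proof -
      have eq: "C * (1/2::real)^(k+n) * E t = (C * E t * (1/2)^n) * (1/2::real)^k"
        by (simp only: power_add mult_ac)
      show ?thesis unfolding d_def using bound[OF st, of "k+n"] eq by linarith
    qed
    have sn: "summable (\<lambda>k. norm (d t (k + n)))"
    proof (rule summable_comparison_test[OF _ sg])
      show "\<exists>N. \<forall>k\<ge>N. norm (norm (d t (k + n))) \<le> C * E t * (1 / 2) ^ n * (1 / 2) ^ k"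
        using bk by (intro exI[of _ 0] allI impI) simp
    qed
    have "norm (\<Sum>k. d t (k + n)) \<le> (\<Sum>k. norm (d t (k + n)))" by (rule summable_norm[OF sn])
    also have "\<dots> \<le> (\<Sum>k. (C * E t * (1/2)^n) * (1/2::real)^k)"
      by (rule suminf_le[OF bk sn sg])
    also have "\<dots> = (C * E t * (1/2)^n) * 2"
      using suminf_mult[of "\<lambda>k. (1/2::real)^k" "C * E t * (1/2)^n"] suminf_geometric[of "1/2::real"]
        summable_geometric[of "1/2::real"] by simp
    finally show ?thesis by (simp add: mult_ac)
  qed
  have phis: "\<phi> s = x"
  proof -
    have "d s = (\<lambda>n. 0)" unfolding d_def using Ps by (simp add: fun_eq_iff)
    then show ?thesis unfolding \<phi>_def by simp
  qed
  have main: "((\<lambda>r. v (\<phi> r) r) has_integral (\<phi> t - x)) {s..t}" if st: "s \<le> t" for t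
  proof -
    define \<epsilon> where "\<epsilon> n = K * (2 * C * E t) * (1/2::real)^n" for n
    have unif: "norm (v (\<phi> r) r - v (P n r) r) \<le> \<epsilon> n" if r: "r \<in> {s..t}" for r n
    proof -
      have "norm (v (\<phi> r) r - v (P n r) r) \<le> K * norm (\<phi> r - P n r)" using lip r by auto
      also have "\<dots> \<le> K * (2 * C * E r * (1/2)^n)" using tail[of r n] r K by (simp add: mult_left_mono)
      also have "\<dots> \<le> K * (2 * C * E t * (1/2)^n)"
      proof -
        have "E r \<le> E t" using Emono[of r t] r by simp
        then have "2 * C * E r \<le> 2 * C * E t" using C0 by (simp add: mult_left_mono)
        then have "2 * C * E r * (1/2::real)^n \<le> 2 * C * E t * (1/2)^n" by (simp add: mult_right_mono)
        then show ?thesis using K by (simp add: mult_left_mono)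
      qed
      finally show ?thesis unfolding \<epsilon>_def by (simp add: mult_ac)
    qed
    have ig: "(\<lambda>r. v (\<phi> r) r) integrable_on {s..t}"
    proof -
      have "(\<lambda>r. v (\<phi> r) r) integrable_on cbox s t"
      proof (rule integrable_uniform_limit)
        fix e :: real assume e: "0 < e"
        obtain n where n: "\<epsilon> n \<le> e" using geom_small[OF e, of "K * (2 * C * E t)"] unfolding \<epsilon>_def by blast
        show "\<exists>g. (\<forall>r\<in>cbox s t. norm (v (\<phi> r) r - g r) \<le> e) \<and> g integrable_on cbox s t"
        proof (intro exI[of _ "\<lambda>r. v (P n r) r"] conjI ballI)
          fix r assume "r \<in> cbox s t"
          then have "r \<in> {s..t}" by simp
          from unif[OF this, of n] n show "norm (v (\<phi> r) r - v (P n r) r) \<le> e" by simp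
        next
          show "(\<lambda>r. v (P n r) r) integrable_on cbox s t" using intg[OF st, of n] by simp
        qed
      qed
      then show ?thesis by simp
    qed
    have "norm (\<phi> t - x - integral {s..t} (\<lambda>r. v (\<phi> r) r)) = 0"
    proof (rule geom_zero)
      fix n
      have "norm (integral {s..t} (\<lambda>r. v (\<phi> r) r) - integral {s..t} (\<lambda>r. v (P n r) r)) \<le> integral {s..t} (\<lambda>r. \<epsilon> n)"
        unfolding integral_diff[OF ig intg[OF st], symmetric]
        by (rule integral_norm_bound_integral[OF integrable_diff[OF ig intg[OF st]]]) (use unif in auto)
      also have "\<dots> = \<epsilon> n * (t - s)" using st by simp
      finally have i1: "norm (integral {s..t} (\<lambda>r. v (\<phi> r) r) - (P (Suc n) t - x)) \<le> \<epsilon> n * (t - s)"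
        using Psuc[of n t] by simp
      have i2: "norm (\<phi> t - P (Suc n) t) \<le> 2 * C * E t * (1/2)^n"
      proof -
        have "(1/2::real)^(Suc n) \<le> (1/2)^n" by simp
        moreover have "0 \<le> 2 * C * E t" using C0 E1[OF st] by simp
        ultimately have "2 * C * E t * (1/2)^(Suc n) \<le> 2 * C * E t * (1/2::real)^n" by (rule mult_left_mono)
        then show ?thesis using tail[OF st, of "Suc n"] by linarith
      qed
      have "norm (\<phi> t - x - integral {s..t} (\<lambda>r. v (\<phi> r) r)) \<le>
            norm (\<phi> t - P (Suc n) t) + norm (integral {s..t} (\<lambda>r. v (\<phi> r) r) - (P (Suc n) t - x))"
        by (rule order_trans[OF _ norm_triangle_ineq4[of "\<phi> t - P (Suc n) t"]]) (simp add: algebra_simps)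
      also have "\<dots> \<le> 2 * C * E t * (1/2)^n + \<epsilon> n * (t - s)" using i1 i2 by simp
      also have "\<dots> = (2 * C * E t + K * (2 * C * E t) * (t - s)) * (1/2)^n"
        unfolding \<epsilon>_def by (simp add: algebra_simps)
      finally show "norm (\<phi> t - x - integral {s..t} (\<lambda>r. v (\<phi> r) r)) \<le> (2 * C * E t + K * (2 * C * E t) * (t - s)) * (1/2)^n" .
    qed simp
    then have "integral {s..t} (\<lambda>r. v (\<phi> r) r) = \<phi> t - x" by simp
    then show ?thesis using ig by (metis has_integral_integral)
  qed
  show ?thesis using phis main by blast
qed

lemma exist_UNIV:
  fixes v :: "real^2 \<Rightarrow> real \<Rightarrow> real^2"
  assumes K: "0 < K"
    and lip: "\<And>t p q. s \<le> t \<Longrightarrow> norm (v p t - v q t) \<le> K * norm (p - q)"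
    and bnd: "\<And>t. s \<le> t \<Longrightarrow> norm (v x t) \<le> B"
    and int: "\<And>\<phi> T. s \<le> T \<Longrightarrow> continuous_on {s..T} \<phi> \<Longrightarrow> (\<lambda>r. v (\<phi> r) r) integrable_on {s..T}"
    and zero: "\<And>p t. t \<le> s \<Longrightarrow> v p t = 0"
  shows "\<exists>\<phi>. is_sol UNIV v x s \<phi>"
proof -
  obtain \<phi> where ph: "\<phi> s = x" "\<And>t. s \<le> t \<Longrightarrow> ((\<lambda>r. v (\<phi> r) r) has_integral (\<phi> t - x)) {s..t}"
    using exist_fwd[OF K lip bnd int] by blast
  define \<psi> where "\<psi> t = (if s \<le> t then \<phi> t else x)" for t
  have "is_sol UNIV v x s \<psi>" unfolding is_sol_def
  proof (intro conjI ballI impI)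
    fix t :: real assume st: "s \<le> t"
    have "((\<lambda>r. v (\<phi> r) r) has_integral (\<psi> t - x)) {s..t}" using ph(2)[OF st] st unfolding \<psi>_def by simp
    then show "((\<lambda>r. v (\<psi> r) r) has_integral (\<psi> t - x)) {s..t}"
      by (rule has_integral_cong[THEN iffD1, rotated]) (simp add: \<psi>_def)
  next
    fix t :: real assume ts: "t \<le> s"
    have "((\<lambda>r. 0::real^2) has_integral 0) {t..s}" by (rule has_integral_0)
    moreover have "x - \<psi> t = 0"
    proof (cases "s \<le> t")
      case True then have "t = s" using ts by simp
      then show ?thesis unfolding \<psi>_def using ph(1) by simp
    qed (simp add: \<psi>_def)
    ultimately show "((\<lambda>r. v (\<psi> r) r) has_integral (x - \<psi> t)) {t..s}"
      by (subst has_integral_cong[where g="\<lambda>r. 0"]) (simp_all add: zero)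
  qed simp
  then show ?thesis by blast
qed

lemma exist_Icc:
  fixes v :: "real^2 \<Rightarrow> real \<Rightarrow> real^2"
  assumes se: "s \<le> e" and K: "0 < K"
    and lip: "\<And>t p q. t \<in> {s..e} \<Longrightarrow> norm (v p t - v q t) \<le> K * norm (p - q)"
    and bnd: "\<And>t. t \<in> {s..e} \<Longrightarrow> norm (v x t) \<le> B"
    and int: "\<And>\<phi> T. s \<le> T \<Longrightarrow> T \<le> e \<Longrightarrow> continuous_on {s..T} \<phi> \<Longrightarrow> (\<lambda>r. v (\<phi> r) r) integrable_on {s..T}"
  shows "\<exists>\<phi>. is_sol {s..e} v x s \<phi>"
proof -
  define w where "w p t = (if t \<le> e then v p t else 0)" for p t
  have "norm (v x s) \<le> B" using bnd se by simp
  then have B0: "0 \<le> B" using norm_ge_zero[of "v x s"] by linarith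
  have lip': "norm (w p t - w q t) \<le> K * norm (p - q)" if "s \<le> t" for t p q
    using lip[of t p q] that K unfolding w_def by simp
  have bnd': "norm (w x t) \<le> B" if "s \<le> t" for t
    using bnd[of t] that B0 unfolding w_def by simp
  have int': "(\<lambda>r. w (\<phi> r) r) integrable_on {s..T}" if sT: "s \<le> T" and c: "continuous_on {s..T} \<phi>" for \<phi> T
  proof (cases "T \<le> e")
    case True
    have "(\<lambda>r. v (\<phi> r) r) integrable_on {s..T}" by (rule int[OF sT True c])
    then show ?thesis by (rule integrable_eq) (use True in \<open>auto simp: w_def\<close>)
  next
    case False
    have c2: "continuous_on {s..e} \<phi>" by (rule continuous_on_subset[OF c]) (use False in auto)
    have i1: "(\<lambda>r. w (\<phi> r) r) integrable_on {s..e}"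
      using int[OF se order_refl c2] by (rule integrable_eq) (auto simp: w_def)
    have i2: "(\<lambda>r. w (\<phi> r) r) integrable_on {e..T}"
    proof -
      have "((\<lambda>r. 0::real^2) has_integral 0) {e..T}" by (rule has_integral_0)
      then have "((\<lambda>r. w (\<phi> r) r) has_integral 0) {e..T}"
        by (rule has_integral_spike_finite[of "{e}", rotated 2]) (auto simp: w_def)
      then show ?thesis by blast
    qed
    show ?thesis by (rule Henstock_Kurzweil_Integration.integrable_combine[OF se _ i1 i2]) (use False in simp)
  qed
  obtain \<phi> where ph: "\<phi> s = x" "\<And>t. s \<le> t \<Longrightarrow> ((\<lambda>r. w (\<phi> r) r) has_integral (\<phi> t - x)) {s..t}"
    using exist_fwd[OF K lip' bnd' int'] by blast
  have "is_sol {s..e} v x s \<phi>" unfolding is_sol_def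
  proof (intro conjI ballI impI)
    show "s \<in> {s..e}" using se by simp
  next
    fix t assume t: "t \<in> {s..e}" "s \<le> t"
    show "((\<lambda>r. v (\<phi> r) r) has_integral (\<phi> t - x)) {s..t}"
      using ph(2)[OF t(2)] by (rule has_integral_cong[THEN iffD1, rotated]) (use t in \<open>auto simp: w_def\<close>)
  next
    fix t assume t: "t \<in> {s..e}" "t \<le> s"
    then have "t = s" by simp
    then show "((\<lambda>r. v (\<phi> r) r) has_integral (x - \<phi> t)) {t..s}"
      using ph(1) has_integral_refl(2)[of "\<lambda>r. v (\<phi> r) r" s] by simp
  qed
  then show ?thesis by blast
qed

lemma sol2_shift:
  assumes "sol2 {a..a+T} v \<phi>"
  shows "sol2 {0..T} (\<lambda>p \<tau>. v p (a + \<tau>)) (\<lambda>\<tau>. \<phi> (a + \<tau>))"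
  unfolding sol2_def
proof (intro allI impI)
  fix p q :: real assume pq: "p \<in> {0..T}" "q \<in> {0..T}" "p \<le> q"
  have "((\<lambda>r. v (\<phi> r) r) has_integral (\<phi> (a+q) - \<phi> (a+p))) {a+p..a+q}"
    using assms pq unfolding sol2_def by auto
  from has_integral_shift_real_ivl[OF this, of a]
  show "((\<lambda>r. v (\<phi> (a + r)) (a + r)) has_integral (\<phi> (a + q) - \<phi> (a + p))) {p..q}"
    by (simp add: add.commute)
qed

lemma sol2_translate:
  assumes "sol2 I v \<phi>" "\<And>p t. v (p + w) t = v p t"
  shows "sol2 I v (\<lambda>t. \<phi> t + w)"
  using assms unfolding sol2_def by simp

lemma rev_ident:
  assumes cd: "c \<le> d" and K: "0 < K"
    and lip: "\<And>t p q. t \<in> {c..d} \<Longrightarrow> norm (v p t - v q t) \<le> K * norm (p - q)"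
    and odd: "\<And>p t. t \<in> {c..d} \<Longrightarrow> v p (c + d - t) = - v p t"
    and sol: "sol2 {c..d} v \<phi>"
  shows "\<phi> d = \<phi> c"
proof -
  define m where "m = (c + d) / 2"
  define \<psi> where "\<psi> t = \<phi> (c + d - t)" for t
  have s\<psi>: "sol2 {m..d} v \<psi>" unfolding sol2_def
  proof (intro allI impI)
    fix p q :: real assume pq: "p \<in> {m..d}" "q \<in> {m..d}" "p \<le> q"
    have "((\<lambda>r. v (\<phi> r) r) has_integral (\<phi> (c+d-p) - \<phi> (c+d-q))) {c+d-q..c+d-p}"
      using sol pq unfolding sol2_def m_def by auto
    then have "((\<lambda>r. v (\<phi> (-r)) (-r)) has_integral (\<phi> (c+d-p) - \<phi> (c+d-q))) {-(c+d-p)..-(c+d-q)}"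
      by (subst has_integral_reflect_real)
    from has_integral_shift_real_ivl[OF this, of "-(c+d)"]
    have "((\<lambda>r. v (\<phi> (c+d-r)) (c+d-r)) has_integral (\<phi> (c+d-p) - \<phi> (c+d-q))) {p..q}"
      by (simp add: algebra_simps)
    moreover have "v (\<phi> (c+d-r)) (c+d-r) = - v (\<psi> r) r" if "r \<in> {p..q}" for r
    proof -
      have "r \<in> {c..d}" using that pq unfolding m_def by auto
      then show ?thesis unfolding \<psi>_def by (rule odd)
    qed
    ultimately have "((\<lambda>r. - v (\<psi> r) r) has_integral (\<phi> (c+d-p) - \<phi> (c+d-q))) {p..q}"
      using has_integral_cong[of "{p..q}" "\<lambda>r. v (\<phi> (c+d-r)) (c+d-r)" "\<lambda>r. - v (\<psi> r) r"] by blast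
    from has_integral_neg[OF this]
    show "((\<lambda>r. v (\<psi> r) r) has_integral (\<psi> q - \<psi> p)) {p..q}"
      unfolding \<psi>_def by simp
  qed
  have s\<phi>: "sol2 {m..d} v \<phi>" by (rule sol2_mono[OF sol]) (auto simp: m_def)
  have "\<psi> d = \<phi> d"
  proof (rule uniq_fwd[of m d K v \<psi> \<phi> d, OF _ K _ s\<psi> s\<phi>])
    show "m \<le> d" using cd unfolding m_def by simp
    show "\<psi> m = \<phi> m" unfolding \<psi>_def m_def by (simp add: field_simps)
    show "d \<in> {m..d}" using cd unfolding m_def by simp
    fix t p q assume "t \<in> {m..d}"
    then have "t \<in> {c..d}" unfolding m_def using cd by simp
    then show "norm (v p t - v q t) \<le> K * norm (p - q)" by (rule lip)
  qed
  then show ?thesis unfolding \<psi>_def by simp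
qed


lemma iter_dd_append: "iter_dd (vs @ ws) f = iter_dd vs (iter_dd ws f)"
  by (induction vs) simp_all

lemma smooth_diff: "smooth_fun f \<Longrightarrow> f differentiable (at x)"
  unfolding smooth_fun_def using iter_dd.simps(1)[of f] by metis

lemma smooth_hasderiv: "smooth_fun f \<Longrightarrow> (f has_derivative frechet_derivative f (at x)) (at x)"
  using smooth_diff frechet_derivative_works by blast

lemma smooth_cont: "smooth_fun f \<Longrightarrow> continuous (at x) f"
  using smooth_diff differentiable_imp_continuous_within by blast

lemma smooth_cont_on: "smooth_fun f \<Longrightarrow> continuous_on S f"
  using smooth_cont continuous_at_imp_continuous_on by blast

lemma smooth_pd: "smooth_fun f \<Longrightarrow> smooth_fun (\<lambda>x. frechet_derivative f (at x) w)"
proof -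
  assume f: "smooth_fun f"
  have e: "iter_dd [w] f = (\<lambda>x. frechet_derivative f (at x) w)" by simp
  show ?thesis unfolding smooth_fun_def
  proof (intro allI)
    fix vs x
    have "iter_dd vs (\<lambda>x. frechet_derivative f (at x) w) = iter_dd (vs @ [w]) f"
      unfolding iter_dd_append e ..
    then show "iter_dd vs (\<lambda>x. frechet_derivative f (at x) w) differentiable at x"
      using f unfolding smooth_fun_def by simp
  qed
qed

lemma deriv_transl:
  fixes f :: "'a::real_normed_vector \<Rightarrow> 'b::real_normed_vector"
  assumes per: "\<And>y. f (y + c) = f y" and d: "f differentiable (at (x + c))"
  shows "frechet_derivative f (at (x + c)) = frechet_derivative f (at x)"
proof -
  define D where "D = frechet_derivative f (at (x + c))"
  have fd: "(f has_derivative D) (at (x + c))" unfolding D_def using d frechet_derivative_works by blast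
  have tr: "((\<lambda>y. y + c) has_derivative (\<lambda>h. h)) (at x)" by (auto intro!: derivative_eq_intros)
  have "((\<lambda>y. f (y + c)) has_derivative (\<lambda>h. D h)) (at x)"
    using has_derivative_compose[OF tr, of f D] fd by simp
  moreover have "(\<lambda>y. f (y + c)) = f" using per by (simp add: fun_eq_iff)
  ultimately have "(f has_derivative D) (at x)" by simp
  then have "D = frechet_derivative f (at x)" by (rule frechet_derivative_at)
  then show ?thesis unfolding D_def .
qed

lemma periodic_pd:
  fixes f :: "real^2 \<Rightarrow> real"
  assumes "smooth_fun f" "periodic_fun f"
  shows "periodic_fun (\<lambda>x. frechet_derivative f (at x) w)"
  unfolding periodic_fun_def
proof (intro allI impI)
  fix x v assume v: "v \<in> lat2"
  have "frechet_derivative f (at (x + v)) = frechet_derivative f (at x)"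
    by (rule deriv_transl) (use assms v smooth_diff in \<open>auto simp: periodic_fun_def\<close>)
  then show "frechet_derivative f (at (x + v)) w = frechet_derivative f (at x) w" by simp
qed

lemma lat_reduce: "\<exists>v\<in>lat2. y + v \<in> cbox 0 (\<chi> j. 2*pi)"
proof -
  define v :: "real^2" where "v = (\<chi> j. - (2*pi) * of_int (floor (y$j / (2*pi))))"
  have "v \<in> lat2" unfolding lat2_def v_def
    by (auto intro!: exI[of _ "- floor (y$j / (2*pi))" for j])
  moreover have "y + v \<in> cbox 0 (\<chi> j. 2*pi)" unfolding mem_box_cart
  proof
    fix j
    have p: "0 < 2*pi" by simp
    have f1: "of_int (floor (y$j / (2*pi))) \<le> y$j / (2*pi)" by (rule of_int_floor_le)
    have f2: "y$j / (2*pi) < of_int (floor (y$j / (2*pi))) + 1" by (rule real_of_int_floor_add_one_gt)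
    have "2*pi * of_int (floor (y$j / (2*pi))) \<le> 2*pi * (y$j / (2*pi))"
      using mult_left_mono[OF f1, of "2*pi"] p by linarith
    then have "2*pi * of_int (floor (y$j / (2*pi))) \<le> y$j" using p by simp
    moreover have "2*pi * (y$j / (2*pi)) < 2*pi * (of_int (floor (y$j / (2*pi))) + 1)"
      using mult_strict_left_mono[OF f2 p] .
    then have "y$j < 2*pi * of_int (floor (y$j / (2*pi))) + 2*pi" using p by (simp add: algebra_simps)
    ultimately show "(0::real^2)$j \<le> (y + v)$j \<and> (y + v)$j \<le> (\<chi> j. 2*pi)$j"
      unfolding v_def by simp
  qed
  ultimately show ?thesis by blast
qed

lemma bounded_periodic:
  fixes g :: "(real^2) \<times> real \<Rightarrow> 'b::real_normed_vector"
  assumes c: "continuous_on UNIV g"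
    and per: "\<And>y t v. v \<in> lat2 \<Longrightarrow> g (y + v, t) = g (y, t)"
    and T: "compact T"
  shows "\<exists>B. \<forall>y. \<forall>t\<in>T. norm (g (y, t)) \<le> B"
proof -
  have "compact (g ` (cbox 0 (\<chi> j. 2*pi) \<times> T))"
    by (rule compact_continuous_image[OF continuous_on_subset[OF c] compact_Times[OF compact_cbox T]]) simp
  then obtain B where B: "\<And>z. z \<in> cbox 0 (\<chi> j. 2*pi) \<times> T \<Longrightarrow> norm (g z) \<le> B"
    using compact_imp_bounded bounded_iff by (metis image_eqI)
  have "norm (g (y, t)) \<le> B" if t: "t \<in> T" for y t
  proof -
    obtain v where v: "v \<in> lat2" "y + v \<in> cbox 0 (\<chi> j. 2*pi)" using lat_reduce by blast
    have "norm (g (y + v, t)) \<le> B" using B v t by simp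
    then show ?thesis using per[OF v(1)] by simp
  qed
  then show ?thesis by blast
qed

lemma bounded_periodic2:
  fixes f :: "real^2 \<Rightarrow> 'b::real_normed_vector"
  assumes c: "continuous_on UNIV f" and per: "periodic_fun f"
  shows "\<exists>B. \<forall>y. norm (f y) \<le> B"
proof -
  have "\<exists>B. \<forall>y. \<forall>t\<in>{0::real}. norm ((\<lambda>p. f (fst p)) (y, t)) \<le> B"
    by (rule bounded_periodic) (use per in \<open>auto simp: periodic_fun_def intro!: continuous_on_compose2[OF c] continuous_intros\<close>)
  then show ?thesis by auto
qed

lemma lip_deriv2:
  fixes f :: "real^2 \<Rightarrow> 'b::real_normed_vector"
  assumes d: "\<And>x. (f has_derivative f' x) (at x)"
    and B: "\<And>x j. norm (f' x (axis j 1)) \<le> B"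
  shows "norm (f p - f q) \<le> (2 * B) * norm (p - q)"
proof (rule differentiable_bound[of UNIV f f'])
  fix x :: "real^2"
  show "(f has_derivative f' x) (at x within UNIV)" using d by simp
  have lin: "linear (f' x)" using d has_derivative_linear by blast
  show "onorm (f' x) \<le> 2 * B"
  proof (rule onorm_le)
    fix h :: "real^2"
    have "h = (\<Sum>i\<in>UNIV. h$i *\<^sub>R axis i 1)"
      using basis_expansion[of h] by (simp add: scalar_mult_eq_scaleR)
    then have "f' x h = (\<Sum>i\<in>UNIV. h$i *\<^sub>R f' x (axis i 1))"
      using linear_sum[OF lin] linear_scale[OF lin] by (metis (no_types, lifting) sum.cong)
    then have "f' x h = h$1 *\<^sub>R f' x (axis 1 1) + h$2 *\<^sub>R f' x (axis 2 1)" by (simp add: sum_2)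
    then have "norm (f' x h) \<le> \<bar>h$1\<bar> * norm (f' x (axis 1 1)) + \<bar>h$2\<bar> * norm (f' x (axis 2 1))"
      by (metis norm_scaleR norm_triangle_ineq)
    also have "\<dots> \<le> norm h * B + norm h * B"
      by (intro add_mono mult_mono component_le_norm_cart B) auto
    finally show "norm (f' x h) \<le> 2 * B * norm h" by simp
  qed
qed auto


definition Ptr :: "(real\<Rightarrow>real) \<Rightarrow> (real\<Rightarrow>real) \<Rightarrow> (real\<Rightarrow>real) \<Rightarrow> (real\<Rightarrow>real) \<Rightarrow> real \<Rightarrow> real^2 \<Rightarrow> real^2 \<Rightarrow> real" where
  "Ptr a1 a2 a3 a4 \<tau> S w = a1 \<tau> * sin (w$1 - S$1) + a2 \<tau> * sin (w$2 - S$2) + a3 \<tau> * cos (w$1 - S$1) + a4 \<tau> * cos (w$2 - S$2)"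

definition Q1 :: "(real\<Rightarrow>real) \<Rightarrow> (real\<Rightarrow>real) \<Rightarrow> (real\<Rightarrow>real) \<Rightarrow> (real\<Rightarrow>real) \<Rightarrow> real \<Rightarrow> real^2 \<Rightarrow> real^2 \<Rightarrow> real" where
  "Q1 a1 a2 a3 a4 \<tau> S w = a1 \<tau> * cos (w$1 - S$1) - a3 \<tau> * sin (w$1 - S$1)"

definition Q2 :: "(real\<Rightarrow>real) \<Rightarrow> (real\<Rightarrow>real) \<Rightarrow> (real\<Rightarrow>real) \<Rightarrow> (real\<Rightarrow>real) \<Rightarrow> real \<Rightarrow> real^2 \<Rightarrow> real^2 \<Rightarrow> real" where
  "Q2 a1 a2 a3 a4 \<tau> S w = a2 \<tau> * cos (w$2 - S$2) - a4 \<tau> * sin (w$2 - S$2)"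

lemma nth_hasderiv: "((\<lambda>w::real^2. w$j) has_derivative (\<lambda>h. h$j)) (at z)"
  by (rule bounded_linear_imp_has_derivative[OF bounded_linear_vec_nth])

lemma Ptr_deriv:
  "((\<lambda>w. Ptr a1 a2 a3 a4 \<tau> S w) has_derivative
     (\<lambda>h. Q1 a1 a2 a3 a4 \<tau> S z * h$1 + Q2 a1 a2 a3 a4 \<tau> S z * h$2)) (at z)"
proof -
  have d1: "((\<lambda>w::real^2. w$1 - S$1) has_derivative (\<lambda>h. h$1)) (at z)"
    using has_derivative_diff[OF nth_hasderiv[of 1] has_derivative_const[of "S$1"]] by simp
  have d2: "((\<lambda>w::real^2. w$2 - S$2) has_derivative (\<lambda>h. h$2)) (at z)"
    using has_derivative_diff[OF nth_hasderiv[of 2] has_derivative_const[of "S$2"]] by simp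
  show ?thesis unfolding Ptr_def Q1_def Q2_def
    by (rule derivative_eq_intros d1 d2 refl | simp)+ (simp add: algebra_simps)
qed

lemma axis_simps2: "axis (1::2) (1::real) $ 1 = 1" "axis (1::2) (1::real) $ 2 = 0"
   "axis (2::2) (1::real) $ 1 = 0" "axis (2::2) (1::real) $ 2 = 1"
  by (simp_all add: axis_def)

lemma pg_chi:
  assumes chi: "smooth_fun chi"
  shows "perp_grad (\<lambda>w. chi w * Ptr a1 a2 a3 a4 \<tau> S w) z =
    (\<chi> j. if j = 1 then - (pd chi 2 z * Ptr a1 a2 a3 a4 \<tau> S z + chi z * Q2 a1 a2 a3 a4 \<tau> S z)
          else pd chi 1 z * Ptr a1 a2 a3 a4 \<tau> S z + chi z * Q1 a1 a2 a3 a4 \<tau> S z)"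
proof -
  have d: "((\<lambda>w. chi w * Ptr a1 a2 a3 a4 \<tau> S w) has_derivative
     (\<lambda>h. chi z * (Q1 a1 a2 a3 a4 \<tau> S z * h$1 + Q2 a1 a2 a3 a4 \<tau> S z * h$2) + frechet_derivative chi (at z) h * Ptr a1 a2 a3 a4 \<tau> S z)) (at z)"
    by (rule has_derivative_mult[OF smooth_hasderiv[OF chi] Ptr_deriv])
  have fd: "frechet_derivative (\<lambda>w. chi w * Ptr a1 a2 a3 a4 \<tau> S w) (at z) = 
     (\<lambda>h. chi z * (Q1 a1 a2 a3 a4 \<tau> S z * h$1 + Q2 a1 a2 a3 a4 \<tau> S z * h$2) + frechet_derivative chi (at z) h * Ptr a1 a2 a3 a4 \<tau> S z)"
    using frechet_derivative_at[OF d] by simp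
  show ?thesis unfolding perp_grad_def pd_def fd
    by (simp add: axis_simps2 vec_eq_iff algebra_simps)
qed

lemma pg_plain:
  shows "perp_grad (\<lambda>w. Ptr a1 a2 a3 a4 \<tau> S w) z =
    (\<chi> j. if j = 1 then - Q2 a1 a2 a3 a4 \<tau> S z else Q1 a1 a2 a3 a4 \<tau> S z)"
proof -
  have fd: "frechet_derivative (\<lambda>w. Ptr a1 a2 a3 a4 \<tau> S w) (at z) = 
     (\<lambda>h. Q1 a1 a2 a3 a4 \<tau> S z * h$1 + Q2 a1 a2 a3 a4 \<tau> S z * h$2)"
    using frechet_derivative_at[OF Ptr_deriv] by simp
  show ?thesis unfolding perp_grad_def pd_def fd
    by (simp add: axis_simps2 vec_eq_iff)
qed


definition LIPF :: "'i set \<Rightarrow> ('i \<Rightarrow> real^2 \<Rightarrow> real) \<Rightarrow> bool" where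
  "LIPF I f \<longleftrightarrow> (\<exists>L. \<forall>i\<in>I. \<forall>p q. \<bar>f i p - f i q\<bar> \<le> L * norm (p - q))"

definition BDF :: "'i set \<Rightarrow> ('i \<Rightarrow> real^2 \<Rightarrow> real) \<Rightarrow> bool" where
  "BDF I f \<longleftrightarrow> (\<exists>B. \<forall>i\<in>I. \<forall>p. \<bar>f i p\<bar> \<le> B)"

lemma LIPF_add: "LIPF I f \<Longrightarrow> LIPF I g \<Longrightarrow> LIPF I (\<lambda>i p. f i p + g i p)"
proof -
  assume "LIPF I f" "LIPF I g"
  then obtain L1 L2 where L1: "\<forall>i\<in>I. \<forall>p q. \<bar>f i p - f i q\<bar> \<le> L1 * norm (p - q)"
    and L2: "\<forall>i\<in>I. \<forall>p q. \<bar>g i p - g i q\<bar> \<le> L2 * norm (p - q)" unfolding LIPF_def by blast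
  have "\<bar>(f i p + g i p) - (f i q + g i q)\<bar> \<le> (L1 + L2) * norm (p - q)" if "i \<in> I" for i p q
  proof -
    have "\<bar>(f i p + g i p) - (f i q + g i q)\<bar> \<le> \<bar>f i p - f i q\<bar> + \<bar>g i p - g i q\<bar>" by simp
    also have "\<dots> \<le> L1 * norm (p - q) + L2 * norm (p - q)"
    proof -
      have "\<bar>f i p - f i q\<bar> \<le> L1 * norm (p - q)" "\<bar>g i p - g i q\<bar> \<le> L2 * norm (p - q)" using L1 L2 that by auto
      then show ?thesis by linarith
    qed
    finally show ?thesis by (simp add: algebra_simps)
  qed
  then show ?thesis unfolding LIPF_def by blast
qed

lemma LIPF_neg: "LIPF I f \<Longrightarrow> LIPF I (\<lambda>i p. - f i p)"
proof -
  have e: "\<bar>- f i p - - f i q\<bar> = \<bar>f i p - f i q\<bar>" for i p q by linarith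
  show "LIPF I f \<Longrightarrow> LIPF I (\<lambda>i p. - f i p)" unfolding LIPF_def e .
qed

lemma LIPF_diff: "LIPF I f \<Longrightarrow> LIPF I g \<Longrightarrow> LIPF I (\<lambda>i p. f i p - g i p)"
  using LIPF_add[of I f "\<lambda>i p. - g i p"] LIPF_neg[of I g] by simp

lemma BDF_add: "BDF I f \<Longrightarrow> BDF I g \<Longrightarrow> BDF I (\<lambda>i p. f i p + g i p)"
proof -
  assume "BDF I f" "BDF I g"
  then obtain B1 B2 where B1: "\<forall>i\<in>I. \<forall>p. \<bar>f i p\<bar> \<le> B1" and B2: "\<forall>i\<in>I. \<forall>p. \<bar>g i p\<bar> \<le> B2"
    unfolding BDF_def by blast
  have "\<bar>f i p + g i p\<bar> \<le> B1 + B2" if "i \<in> I" for i p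
  proof -
    have "\<bar>f i p\<bar> \<le> B1" "\<bar>g i p\<bar> \<le> B2" using B1 B2 that by auto
    then show ?thesis by linarith
  qed
  then show ?thesis unfolding BDF_def by blast
qed

lemma BDF_neg: "BDF I f \<Longrightarrow> BDF I (\<lambda>i p. - f i p)"
  unfolding BDF_def by simp

lemma BDF_diff: "BDF I f \<Longrightarrow> BDF I g \<Longrightarrow> BDF I (\<lambda>i p. f i p - g i p)"
  using BDF_add[of I f "\<lambda>i p. - g i p"] BDF_neg[of I g] by simp

lemma LIPF_mult:
  assumes "LIPF I f" "LIPF I g" "BDF I f" "BDF I g"
  shows "LIPF I (\<lambda>i p. f i p * g i p)"
proof -
  obtain L1 L2 where L1: "\<forall>i\<in>I. \<forall>p q. \<bar>f i p - f i q\<bar> \<le> L1 * norm (p - q)"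
    and L2: "\<forall>i\<in>I. \<forall>p q. \<bar>g i p - g i q\<bar> \<le> L2 * norm (p - q)" using assms unfolding LIPF_def by blast
  obtain B1 B2 where B1: "\<forall>i\<in>I. \<forall>p. \<bar>f i p\<bar> \<le> B1" and B2: "\<forall>i\<in>I. \<forall>p. \<bar>g i p\<bar> \<le> B2"
    using assms unfolding BDF_def by blast
  have "\<bar>f i p * g i p - f i q * g i q\<bar> \<le> (B1 * L2 + B2 * L1) * norm (p - q)" if i: "i \<in> I" for i p q
  proof -
    have "f i p * g i p - f i q * g i q = f i p * (g i p - g i q) + g i q * (f i p - f i q)"
      by (simp add: algebra_simps)
    then have "\<bar>f i p * g i p - f i q * g i q\<bar> \<le> \<bar>f i p\<bar> * \<bar>g i p - g i q\<bar> + \<bar>g i q\<bar> * \<bar>f i p - f i q\<bar>"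
      by (metis abs_mult abs_triangle_ineq)
    also have "\<dots> \<le> B1 * (L2 * norm (p - q)) + B2 * (L1 * norm (p - q))"
    proof -
      have a: "\<bar>f i p\<bar> \<le> B1" "\<bar>g i q\<bar> \<le> B2" using B1 B2 i by auto
      have b: "\<bar>g i p - g i q\<bar> \<le> L2 * norm (p - q)" "\<bar>f i p - f i q\<bar> \<le> L1 * norm (p - q)" using L1 L2 i by auto
      have "\<bar>f i p\<bar> * \<bar>g i p - g i q\<bar> \<le> B1 * (L2 * norm (p - q))"
        by (rule mult_mono[OF a(1) b(1)]) (use a in auto)
      moreover have "\<bar>g i q\<bar> * \<bar>f i p - f i q\<bar> \<le> B2 * (L1 * norm (p - q))"
        by (rule mult_mono[OF a(2) b(2)]) (use a in auto)
      ultimately show ?thesis by linarith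
    qed
    finally show ?thesis by (simp add: algebra_simps)
  qed
  then show ?thesis unfolding LIPF_def by blast
qed

lemma BDF_mult: "BDF I f \<Longrightarrow> BDF I g \<Longrightarrow> BDF I (\<lambda>i p. f i p * g i p)"
proof -
  assume "BDF I f" "BDF I g"
  then obtain B1 B2 where B1: "\<forall>i\<in>I. \<forall>p. \<bar>f i p\<bar> \<le> B1" and B2: "\<forall>i\<in>I. \<forall>p. \<bar>g i p\<bar> \<le> B2"
    unfolding BDF_def by blast
  have "\<bar>f i p * g i p\<bar> \<le> B1 * B2" if "i \<in> I" for i p
  proof -
    have a: "\<bar>f i p\<bar> \<le> B1" "\<bar>g i p\<bar> \<le> B2" using B1 B2 that by auto
    have "\<bar>f i p\<bar> * \<bar>g i p\<bar> \<le> B1 * B2" by (rule mult_mono[OF a]) (use a in auto)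
    then show ?thesis by (simp add: abs_mult)
  qed
  then show ?thesis unfolding BDF_def by blast
qed

lemma LIPF_const: "LIPF I (\<lambda>i p. c i)"
  unfolding LIPF_def by (rule exI[of _ 0]) simp

lemma BDF_const: "\<forall>i\<in>I. \<bar>c i\<bar> \<le> B \<Longrightarrow> BDF I (\<lambda>i p. c i)"
  unfolding BDF_def by blast

lemma LIPF_fixed: "(\<And>p q. \<bar>g p - g q\<bar> \<le> L * norm (p - q)) \<Longrightarrow> LIPF I (\<lambda>i p. g p)"
  unfolding LIPF_def by blast

lemma BDF_fixed: "(\<And>p. \<bar>g p\<bar> \<le> B) \<Longrightarrow> BDF I (\<lambda>i p. g p)"
  unfolding BDF_def by blast

lemma LIPF_sin: "LIPF I (\<lambda>i p. sin (p$j - c i))"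
proof -
  have "\<bar>sin (p$j - c i) - sin (q$j - c i)\<bar> \<le> 1 * norm (p - q)" for i p q
  proof -
    have "\<bar>sin (p$j - c i) - sin (q$j - c i)\<bar> = \<bar>2 * sin ((p$j - q$j) / 2) * cos ((p$j - c i + (q$j - c i)) / 2)\<bar>"
      by (simp add: sin_diff_sin)
    also have "\<dots> \<le> 2 * \<bar>sin ((p$j - q$j) / 2)\<bar>"
      using mult_left_mono[OF abs_cos_le_one[of "(p$j - c i + (q$j - c i)) / 2"] abs_ge_zero[of "sin ((p$j - q$j) / 2)"]]
      by (simp add: abs_mult)
    also have "\<dots> \<le> 2 * \<bar>(p$j - q$j) / 2\<bar>" using abs_sin_x_le_abs_x[of "(p$j - q$j) / 2"] by linarith
    also have "\<dots> = \<bar>(p - q)$j\<bar>" by simp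
    also have "\<dots> \<le> norm (p - q)" by (rule component_le_norm_cart)
    finally show ?thesis by simp
  qed
  then show ?thesis unfolding LIPF_def by blast
qed

lemma LIPF_cos: "LIPF I (\<lambda>i p. cos (p$j - c i))"
proof -
  have "\<bar>cos (p$j - c i) - cos (q$j - c i)\<bar> \<le> 1 * norm (p - q)" for i p q
  proof -
    have "\<bar>cos (p$j - c i) - cos (q$j - c i)\<bar> = \<bar>2 * sin ((p$j - c i + (q$j - c i)) / 2) * sin ((q$j - p$j) / 2)\<bar>"
      by (simp add: cos_diff_cos)
    also have "\<dots> \<le> 2 * \<bar>sin ((q$j - p$j) / 2)\<bar>"
      using mult_right_mono[OF abs_sin_le_one[of "(p$j - c i + (q$j - c i)) / 2"] abs_ge_zero[of "sin ((q$j - p$j) / 2)"]]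
      by (simp add: abs_mult)
    also have "\<dots> \<le> 2 * \<bar>(q$j - p$j) / 2\<bar>" using abs_sin_x_le_abs_x[of "(q$j - p$j) / 2"] by linarith
    also have "\<dots> = \<bar>(p - q)$j\<bar>" by simp
    also have "\<dots> \<le> norm (p - q)" by (rule component_le_norm_cart)
    finally show ?thesis by simp
  qed
  then show ?thesis unfolding LIPF_def by blast
qed

lemma BDF_sin: "BDF I (\<lambda>i p. sin (p$j - c i))"
  unfolding BDF_def by (rule exI[of _ 1]) simp

lemma BDF_cos: "BDF I (\<lambda>i p. cos (p$j - c i))"
  unfolding BDF_def by (rule exI[of _ 1]) simp

lemma norm_vec2: "norm (x::real^2) \<le> \<bar>x$1\<bar> + \<bar>x$2\<bar>"
  using norm_le_l1_cart[of x] by (simp add: sum_2)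

lemma vec_lip:
  assumes "LIPF I f" "LIPF I g"
  shows "\<exists>L. \<forall>i\<in>I. \<forall>p q. norm ((\<chi> j. if j = 1 then f i p else g i p) - (\<chi> j. if j = 1 then f i q else g i q) :: real^2) \<le> L * norm (p - q)"
proof -
  obtain L1 L2 where L1: "\<forall>i\<in>I. \<forall>p q. \<bar>f i p - f i q\<bar> \<le> L1 * norm (p - q)"
    and L2: "\<forall>i\<in>I. \<forall>p q. \<bar>g i p - g i q\<bar> \<le> L2 * norm (p - q)" using assms unfolding LIPF_def by blast
  have "norm ((\<chi> j. if j = 1 then f i p else g i p) - (\<chi> j. if j = 1 then f i q else g i q) :: real^2) \<le> (L1 + L2) * norm (p - q)"
    if i: "i \<in> I" for i p q
  proof -
    have "norm ((\<chi> j. if j = 1 then f i p else g i p) - (\<chi> j. if j = 1 then f i q else g i q) :: real^2)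
       \<le> \<bar>f i p - f i q\<bar> + \<bar>g i p - g i q\<bar>"
      using norm_vec2[of "(\<chi> j. if j = 1 then f i p else g i p) - (\<chi> j. if j = 1 then f i q else g i q)"]
      by simp
    also have "\<dots> \<le> L1 * norm (p - q) + L2 * norm (p - q)"
    proof -
      have "\<bar>f i p - f i q\<bar> \<le> L1 * norm (p - q)" "\<bar>g i p - g i q\<bar> \<le> L2 * norm (p - q)" using L1 L2 i by auto
      then show ?thesis by linarith
    qed
    finally show ?thesis by (simp add: algebra_simps)
  qed
  then show ?thesis by blast
qed

lemma vec_bd:
  assumes "BDF I f" "BDF I g"
  shows "\<exists>B. \<forall>i\<in>I. \<forall>p. norm ((\<chi> j. if j = 1 then f i p else g i p) :: real^2) \<le> B"
proof -
  obtain B1 B2 where B1: "\<forall>i\<in>I. \<forall>p. \<bar>f i p\<bar> \<le> B1" and B2: "\<forall>i\<in>I. \<forall>p. \<bar>g i p\<bar> \<le> B2"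
    using assms unfolding BDF_def by blast
  have "norm ((\<chi> j. if j = 1 then f i p else g i p) :: real^2) \<le> B1 + B2" if "i \<in> I" for i p
  proof -
    have "\<bar>f i p\<bar> \<le> B1" "\<bar>g i p\<bar> \<le> B2" using B1 B2 that by auto
    moreover have "norm ((\<chi> j. if j = 1 then f i p else g i p) :: real^2) \<le> \<bar>f i p\<bar> + \<bar>g i p\<bar>"
      using norm_vec2[of "(\<chi> j. if j = 1 then f i p else g i p)"] by simp
    ultimately show ?thesis by linarith
  qed
  then show ?thesis by blast
qed


lemma sol2_cong_spike:
  assumes "sol2 I v \<phi>" "is_interval I" "finite F" "\<And>t. t \<in> I \<Longrightarrow> t \<notin> F \<Longrightarrow> v (\<phi> t) t = w (\<phi> t) t"
  shows "sol2 I w \<phi>"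
  unfolding sol2_def
proof (intro allI impI)
  fix p q assume pq: "p \<in> I" "q \<in> I" "p \<le> q"
  have sub: "{p..q} \<subseteq> I" using assms(2) pq
    by (metis atLeastAtMost_iff is_interval_1 subsetI)
  have h: "((\<lambda>r. v (\<phi> r) r) has_integral (\<phi> q - \<phi> p)) {p..q}" using assms(1) pq unfolding sol2_def by auto
  show "((\<lambda>r. w (\<phi> r) r) has_integral (\<phi> q - \<phi> p)) {p..q}"
  proof (rule has_integral_spike_finite[OF assms(3) _ h])
    fix r assume "r \<in> {p..q} - F"
    then show "w (\<phi> r) r = v (\<phi> r) r" using assms(4) sub by auto
  qed
qed

lemma sol2_translate':
  assumes "sol2 I v \<phi>" "is_interval I" "\<And>p t. t \<in> I \<Longrightarrow> v (p + w) t = v p t"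
  shows "sol2 I v (\<lambda>t. \<phi> t + w)"
  unfolding sol2_def
proof (intro allI impI)
  fix p q assume pq: "p \<in> I" "q \<in> I" "p \<le> q"
  have sub: "{p..q} \<subseteq> I" using assms(2) pq
    by (metis atLeastAtMost_iff is_interval_1 subsetI)
  have h: "((\<lambda>r. v (\<phi> r) r) has_integral (\<phi> q - \<phi> p)) {p..q}" using assms(1) pq unfolding sol2_def by auto
  have "((\<lambda>r. v (\<phi> r + w) r) has_integral (\<phi> q - \<phi> p)) {p..q}"
    by (rule has_integral_cong[THEN iffD1, OF _ h]) (use sub assms(3) in auto)
  then show "((\<lambda>r. v (\<phi> r + w) r) has_integral (\<phi> q + w - (\<phi> p + w))) {p..q}" by simp
qed

lemma cont_bound:
  fixes f :: "'a::metric_space \<Rightarrow> 'b::real_normed_vector"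
  assumes "continuous_on S f" "compact S"
  shows "\<exists>B. \<forall>x\<in>S. norm (f x) \<le> B"
proof -
  have "bounded (f ` S)" by (rule compact_imp_bounded[OF compact_continuous_image[OF assms]])
  then show ?thesis unfolding bounded_iff by blast
qed

lemma SPB:
  fixes f :: "real^2 \<Rightarrow> real"
  assumes "smooth_fun f" "periodic_fun f"
  shows "\<exists>B. \<forall>y. \<bar>f y\<bar> \<le> B"
  using bounded_periodic2[OF smooth_cont_on[OF assms(1)] assms(2)] by simp

lemma SPL:
  fixes f :: "real^2 \<Rightarrow> real"
  assumes f: "smooth_fun f" "periodic_fun f"
  shows "\<exists>L. \<forall>p q. \<bar>f p - f q\<bar> \<le> L * norm (p - q)"
proof -
  have b: "\<exists>B. \<forall>y. norm (frechet_derivative f (at y) (axis j 1)) \<le> B" for j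
    by (rule bounded_periodic2[OF smooth_cont_on[OF smooth_pd[OF f(1)]] periodic_pd[OF f]])
  obtain B1 where B1: "\<forall>y. norm (frechet_derivative f (at y) (axis 1 1)) \<le> B1" using b by blast
  obtain B2 where B2: "\<forall>y. norm (frechet_derivative f (at y) (axis 2 1)) \<le> B2" using b by blast
  have bb: "norm (frechet_derivative f (at y) (axis j 1)) \<le> max B1 B2" for y j
  proof -
    have "j = 1 \<or> j = 2" by (rule exhaust_2)
    moreover have "norm (frechet_derivative f (at y) (axis 1 1)) \<le> max B1 B2"
      using B1 max.cobounded1[of B1 B2] by (metis order_trans)
    moreover have "norm (frechet_derivative f (at y) (axis 2 1)) \<le> max B1 B2"
      using B2 max.cobounded2[of B2 B1] by (metis order_trans)
    ultimately show ?thesis by auto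
  qed
  have "norm (f p - f q) \<le> (2 * max B1 B2) * norm (p - q)" for p q
    by (rule lip_deriv2[OF smooth_hasderiv[OF f(1)] bb])
  then show ?thesis by (intro exI[of _ "2 * max B1 B2"]) simp
qed

lemma lat2_0: "0 \<in> lat2" unfolding lat2_def by (auto intro: exI[of _ 0])
lemma lat2_add: "v \<in> lat2 \<Longrightarrow> w \<in> lat2 \<Longrightarrow> v + w \<in> lat2"
proof -
  assume a: "v \<in> lat2" "w \<in> lat2"
  show "v + w \<in> lat2" unfolding lat2_def
  proof (intro CollectI allI)
    fix j
    obtain m n :: int where "v$j = 2 * pi * of_int m" "w$j = 2 * pi * of_int n" using a unfolding lat2_def by blast
    then show "\<exists>k::int. (v + w)$j = 2 * pi * of_int k" by (intro exI[of _ "m+n"]) (simp add: algebra_simps)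
  qed
qed
lemma lat2_neg: "v \<in> lat2 \<Longrightarrow> - v \<in> lat2"
proof -
  assume a: "v \<in> lat2"
  show "- v \<in> lat2" unfolding lat2_def
  proof (intro CollectI allI)
    fix j
    obtain m :: int where "v$j = 2 * pi * of_int m" using a unfolding lat2_def by blast
    then show "\<exists>k::int. (- v)$j = 2 * pi * of_int k" by (intro exI[of _ "-m"]) simp
  qed
qed
lemma lat2_diff: "v \<in> lat2 \<Longrightarrow> w \<in> lat2 \<Longrightarrow> v - w \<in> lat2"
  using lat2_add[of v "- w"] lat2_neg[of w] by simp

lemma lat2_sin: "v \<in> lat2 \<Longrightarrow> sin (x + v$j) = sin x"
proof -
  assume "v \<in> lat2"
  then obtain m :: int where m: "v$j = 2 * pi * of_int m" unfolding lat2_def by blast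
  show ?thesis unfolding m sin_add by simp
qed
lemma lat2_cos: "v \<in> lat2 \<Longrightarrow> cos (x + v$j) = cos x"
proof -
  assume "v \<in> lat2"
  then obtain m :: int where m: "v$j = 2 * pi * of_int m" unfolding lat2_def by blast
  show ?thesis unfolding m cos_add by simp
qed

lemma infdist_shift:
  fixes y c :: "'a::real_normed_vector"
  shows "infdist y ((\<lambda>z. z + c) ` A) = infdist (y - c) A"
proof (cases "A = {}")
  case True then show ?thesis by (simp add: infdist_def)
next
  case False
  have "infdist y ((\<lambda>z. z + c) ` A) = (INF a\<in>(\<lambda>z. z + c) ` A. dist y a)"
    using False by (simp add: infdist_def)
  also have "\<dots> = (INF a\<in>A. dist y (a + c))" by (simp add: image_image)
  also have "\<dots> = (INF a\<in>A. dist (y - c) a)" by (simp add: dist_norm algebra_simps)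
  also have "\<dots> = infdist (y - c) A" using False by (simp add: infdist_def)
  finally show ?thesis .
qed

lemma tsquare_per: "v \<in> lat2 \<Longrightarrow> (\<lambda>z. z + v) ` tsquare c L = tsquare c L"
proof -
  assume v: "v \<in> lat2"
  have 1: "z + v \<in> tsquare c L" if zz: "z \<in> tsquare c L" for z
  proof -
    obtain u where u: "u \<in> lat2" "z + u \<in> box c (c + (\<chi> j. L))" using zz unfolding tsquare_def by blast
    have e: "z + v + (u - v) = z + u" by simp
    show ?thesis unfolding tsquare_def
      by (rule CollectI, rule bexI[of _ "u - v"]) (simp only: e u(2), rule lat2_diff[OF u(1) v])
  qed
  have 2: "z \<in> (\<lambda>z. z + v) ` tsquare c L" if zz: "z \<in> tsquare c L" for z
  proof -
    obtain u where u: "u \<in> lat2" "z + u \<in> box c (c + (\<chi> j. L))" using zz unfolding tsquare_def by blast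
    have e: "z - v + (u + v) = z + u" by simp
    have "z - v \<in> tsquare c L" unfolding tsquare_def
      by (rule CollectI, rule bexI[of _ "u + v"]) (simp only: e u(2), rule lat2_add[OF u(1) v])
    then show ?thesis by (rule rev_image_eqI) simp
  qed
  show ?thesis
  proof (rule set_eqI, rule iffI)
    fix z assume "z \<in> (\<lambda>z. z + v) ` tsquare c L"
    then obtain z0 where "z0 \<in> tsquare c L" "z = z0 + v" by blast
    then show "z \<in> tsquare c L" using 1 by simp
  next
    fix z assume "z \<in> tsquare c L" then show "z \<in> (\<lambda>z. z + v) ` tsquare c L" by (rule 2)
  qed
qed

lemma infdist_per: "v \<in> lat2 \<Longrightarrow> infdist (y + v) (tsquare c L) = infdist y (tsquare c L)"
  using infdist_shift[of "y + v" v "tsquare c L"] tsquare_per[of v c L] by simp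

lemma open_N: "open {y::real^2. infdist y A < r}"
  by (rule open_Collect_less) (intro continuous_intros)+

lemma pd_zero_const:
  fixes chi :: "real^2 \<Rightarrow> real"
  assumes "open V" "y \<in> V" "\<And>z. z \<in> V \<Longrightarrow> chi z = 1"
  shows "pd chi k y = 0"
proof -
  have "((\<lambda>z. 1::real) has_derivative (\<lambda>h. 0)) (at y)" by (rule has_derivative_const)
  then have "(chi has_derivative (\<lambda>h. 0)) (at y)"
    by (rule has_derivative_transform_within_open[OF _ assms(1,2)]) (use assms(3) in simp)
  then have "frechet_derivative chi (at y) = (\<lambda>h. 0)" by (rule frechet_derivative_at[symmetric])
  then show ?thesis unfolding pd_def by simp
qed


definition Gv :: "(real^2 \<Rightarrow> real) \<Rightarrow> (real\<Rightarrow>real) \<Rightarrow> (real\<Rightarrow>real) \<Rightarrow> (real\<Rightarrow>real) \<Rightarrow> (real\<Rightarrow>real) \<Rightarrow> real \<times> (real^2) \<Rightarrow> real^2 \<Rightarrow> real^2" where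
  "Gv chi a1 a2 a3 a4 i z = (\<chi> j. if j = 1 then - (pd chi 2 z * Ptr a1 a2 a3 a4 (fst i) (snd i) z + chi z * Q2 a1 a2 a3 a4 (fst i) (snd i) z)
          else pd chi 1 z * Ptr a1 a2 a3 a4 (fst i) (snd i) z + chi z * Q1 a1 a2 a3 a4 (fst i) (snd i) z)"

definition Hv :: "(real\<Rightarrow>real) \<Rightarrow> (real\<Rightarrow>real) \<Rightarrow> (real\<Rightarrow>real) \<Rightarrow> (real\<Rightarrow>real) \<Rightarrow> real \<times> (real^2) \<Rightarrow> real^2 \<Rightarrow> real^2" where
  "Hv a1 a2 a3 a4 i z = (\<chi> j. if j = 1 then - Q2 a1 a2 a3 a4 (fst i) (snd i) z else Q1 a1 a2 a3 a4 (fst i) (snd i) z)"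

locale L3 =
  fixes \<omega> :: "(real^2) set" and M :: nat and L :: real
    and c :: "nat \<Rightarrow> real^2" and c0 :: "real^2" and S :: "nat \<Rightarrow> real^2"
    and \<mu> :: "real^2 \<Rightarrow> real" and chi :: "real^2 \<Rightarrow> real"
    and Tstar tc0 :: real and ta tb tc :: "nat \<Rightarrow> real"
    and ybar :: "real^2 \<Rightarrow> real \<Rightarrow> real^2"
    and phistar :: "real^2 \<Rightarrow> real \<Rightarrow> real"
    and ustar U :: "real^2 \<Rightarrow> real \<Rightarrow> real^2"
    and a1 a2 a3 a4 :: "real \<Rightarrow> real" and r ya yb :: real
  assumes M_pos: "M \<ge> 1"
    and L_pos: "L > 0"
    and shifts: "\<And>j. j \<in> {1..M} \<Longrightarrow> (\<lambda>y. y + S j) ` tsquare (c j) L = tsquare c0 L"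
    and mu_supp: "supp \<mu> \<subseteq> tsquare c0 L"
    and chi_smooth: "smooth_fun chi" and chi_per: "periodic_fun chi"
    and Tstar_def: "Tstar = 1 / (3 * real M + 2)"
    and tc0: "0 < tc0" "tc0 + 3 * real M * Tstar < 1"
    and ta_def: "\<And>j. ta j = tc0 + (3 * real j - 2) * Tstar"
    and tb_def: "\<And>j. tb j = tc0 + (3 * real j - 1) * Tstar"
    and tc_def: "\<And>j. tc j = tc0 + 3 * real j * Tstar"
    and ybar_smooth: "smooth_fun (\<lambda>p::(real^2) \<times> real. ybar (fst p) (snd p))"
    and ybar_compact: "0 < ya" "ya \<le> yb" "yb < 1" "\<And>y t. t \<notin> {ya..yb} \<Longrightarrow> ybar y t = 0"
    and ybar_per: "\<And>t. periodic_fun (\<lambda>y. ybar y t)"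
    and ybar_vanish: "\<And>j y t. j \<in> {1..M} \<Longrightarrow> t \<in> {ta j..tb j} \<Longrightarrow> ybar y t = 0"
    and ybar_flow: "\<And>j y t. j \<in> {1..M} \<Longrightarrow> infdist y (tsquare (c j) L) < L \<Longrightarrow>
                      t \<in> {ta j..tb j} \<Longrightarrow> torus_eq (flow UNIV ybar y 0 t) (y + S j)"
    and ybar_odd: "\<And>j y \<tau>. j \<in> {1..M} \<Longrightarrow> \<bar>\<tau>\<bar> \<le> 3 * Tstar / 2 \<Longrightarrow>
                      ybar y ((tc (j - 1) + tc j) / 2 + \<tau>) = - ybar y ((tc (j - 1) + tc j) / 2 - \<tau>)"
    and a_smooth: "smooth_fun a1" "smooth_fun a2" "smooth_fun a3" "smooth_fun a4"
    and span: "\<And>y t. t \<in> {0..Tstar} \<Longrightarrow> phistar y t =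
                             a1 t * sin (y $ 1) + a2 t * sin (y $ 2) + a3 t * cos (y $ 1) + a4 t * cos (y $ 2)"
    and ustar_def: "\<And>y t. ustar y t = perp_grad (\<lambda>z. phistar z t) y"
    and ustar_rev: "\<And>y t. t \<in> {0..Tstar} \<Longrightarrow> ustar y (Tstar - t) = - ustar y t"
    and r_pos: "0 < r" "r < L"
    and r_chi: "\<And>y. infdist y (tsquare c0 L) < r \<Longrightarrow> chi y = 1"
    and small: "\<And>S' y s t. y \<in> supp \<mu> \<Longrightarrow> s \<in> {0..Tstar} \<Longrightarrow> t \<in> {0..Tstar} \<Longrightarrow>
                     infdist (flow {0..Tstar} (\<lambda>z \<tau>. perp_grad (\<lambda>w. chi w * phistar (w - S') \<tau>) z) y s t)
                        (tsquare c0 L) < r \<and>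
                     infdist (flow {0..Tstar} (\<lambda>z \<tau>. ustar (z - S') \<tau>) y s t) (tsquare c0 L) < r"
    and U_def: "\<And>y t. U y t = ybar y t +
                  (\<Sum>j\<in>{1..M}. indicator {ta j..tb j} t *\<^sub>R
                      perp_grad (\<lambda>z. chi z * phistar (z - S j) (t - ta j)) y)"
begin

abbreviation "G \<equiv> Gv chi a1 a2 a3 a4"
abbreviation "H \<equiv> Hv a1 a2 a3 a4"
abbreviation "Is \<equiv> {0..Tstar}"

lemma Tpos: "0 < Tstar" unfolding Tstar_def by simp

lemma tb_eq: "tb j = ta j + Tstar" unfolding ta_def tb_def by (simp add: algebra_simps)

lemma ta_pos: "j \<ge> 1 \<Longrightarrow> 0 < ta j"
proof -
  assume "j \<ge> 1"
  then have "1 \<le> real j" by simp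
  then have "0 \<le> (3 * real j - 2) * Tstar" using Tpos by simp
  then show ?thesis unfolding ta_def using tc0(1) by linarith
qed

lemma phi_eq: "t \<in> Is \<Longrightarrow> phistar y t = Ptr a1 a2 a3 a4 t 0 y"
  unfolding span Ptr_def by simp

lemma G_eq: "t \<in> Is \<Longrightarrow> perp_grad (\<lambda>w. chi w * phistar (w - S') t) z = G (t, S') z"
proof -
  assume t: "t \<in> Is"
  have "(\<lambda>w. chi w * phistar (w - S') t) = (\<lambda>w. chi w * Ptr a1 a2 a3 a4 t S' w)"
    using phi_eq[OF t] by (simp add: Ptr_def fun_eq_iff)
  then show ?thesis unfolding Gv_def fst_conv snd_conv using pg_chi[OF chi_smooth] by simp
qed

lemma H_eq: "t \<in> Is \<Longrightarrow> ustar (z - S') t = H (t, S') z"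
proof -
  assume t: "t \<in> Is"
  have "(\<lambda>w. phistar w t) = (\<lambda>w. Ptr a1 a2 a3 a4 t 0 w)"
    using phi_eq[OF t] by (simp add: fun_eq_iff)
  then have e: "ustar (z - S') t = (\<chi> j. if j = 1 then - Q2 a1 a2 a3 a4 t 0 (z - S') else Q1 a1 a2 a3 a4 t 0 (z - S'))"
    unfolding ustar_def using pg_plain by simp
  have e1: "Q2 a1 a2 a3 a4 t 0 (z - S') = Q2 a1 a2 a3 a4 t S' z" and e2: "Q1 a1 a2 a3 a4 t 0 (z - S') = Q1 a1 a2 a3 a4 t S' z"
    unfolding Q1_def Q2_def by simp_all
  show ?thesis unfolding Hv_def fst_conv snd_conv e e1 e2 by (rule refl)
qed

lemma a_odd:
  assumes t: "t \<in> Is"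
  shows "a1 (Tstar - t) = - a1 t" "a2 (Tstar - t) = - a2 t" "a3 (Tstar - t) = - a3 t" "a4 (Tstar - t) = - a4 t"
proof -
  have t': "Tstar - t \<in> Is" using t by simp
  have e: "H (Tstar - t, 0) y = - H (t, 0) y" for y
    using ustar_rev[OF t, of y] H_eq[OF t, of y 0] H_eq[OF t', of y 0] by simp
  have e0: "H (Tstar - t, 0) 0 = - H (t, 0) 0" by (rule e)
  have e1: "H (Tstar - t, 0) (\<chi> j. pi/2) = - H (t, 0) (\<chi> j. pi/2)" by (rule e)
  from e0 have "(H (Tstar - t, 0) 0)$1 = (- H (t, 0) 0)$1" "(H (Tstar - t, 0) 0)$2 = (- H (t, 0) 0)$2" by simp_all
  then show "a1 (Tstar - t) = - a1 t" "a2 (Tstar - t) = - a2 t"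
    unfolding Hv_def Q1_def Q2_def by simp_all
  from e1 have "(H (Tstar - t, 0) (\<chi> j. pi/2))$1 = (- H (t, 0) (\<chi> j. pi/2))$1"
    "(H (Tstar - t, 0) (\<chi> j. pi/2))$2 = (- H (t, 0) (\<chi> j. pi/2))$2" by simp_all
  then show "a3 (Tstar - t) = - a3 t" "a4 (Tstar - t) = - a4 t"
    unfolding Hv_def Q1_def Q2_def by simp_all
qed

lemma G_odd: "t \<in> Is \<Longrightarrow> G (Tstar - t, S') z = - G (t, S') z"
  using a_odd[of t] unfolding Gv_def Ptr_def Q1_def Q2_def by (simp add: vec_eq_iff algebra_simps)

lemma a_bnd: "\<exists>A. \<forall>i\<in>Is \<times> (UNIV::(real^2) set). \<bar>a (fst i)\<bar> \<le> A" if sa: "smooth_fun a" for a :: "real \<Rightarrow> real"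
proof -
  obtain A where "\<forall>t\<in>Is. norm (a t) \<le> A" using cont_bound[OF smooth_cont_on[OF sa] compact_Icc] by blast
  then have "\<forall>i\<in>Is \<times> (UNIV::(real^2) set). \<bar>a (fst i)\<bar> \<le> A" by auto
  then show ?thesis by blast
qed

lemma LP: "LIPF (Is \<times> UNIV) (\<lambda>i z. Ptr a1 a2 a3 a4 (fst i) (snd i) z)"
  and BP: "BDF (Is \<times> UNIV) (\<lambda>i z. Ptr a1 a2 a3 a4 (fst i) (snd i) z)"
  and LQ1: "LIPF (Is \<times> UNIV) (\<lambda>i z. Q1 a1 a2 a3 a4 (fst i) (snd i) z)"
  and BQ1: "BDF (Is \<times> UNIV) (\<lambda>i z. Q1 a1 a2 a3 a4 (fst i) (snd i) z)"
  and LQ2: "LIPF (Is \<times> UNIV) (\<lambda>i z. Q2 a1 a2 a3 a4 (fst i) (snd i) z)"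
  and BQ2: "BDF (Is \<times> UNIV) (\<lambda>i z. Q2 a1 a2 a3 a4 (fst i) (snd i) z)"
proof -
  obtain A1 where A1: "\<forall>i\<in>Is \<times> (UNIV::(real^2) set). \<bar>a1 (fst i)\<bar> \<le> A1" using a_bnd[OF a_smooth(1)] by blast
  obtain A2 where A2: "\<forall>i\<in>Is \<times> (UNIV::(real^2) set). \<bar>a2 (fst i)\<bar> \<le> A2" using a_bnd[OF a_smooth(2)] by blast
  obtain A3 where A3: "\<forall>i\<in>Is \<times> (UNIV::(real^2) set). \<bar>a3 (fst i)\<bar> \<le> A3" using a_bnd[OF a_smooth(3)] by blast
  obtain A4 where A4: "\<forall>i\<in>Is \<times> (UNIV::(real^2) set). \<bar>a4 (fst i)\<bar> \<le> A4" using a_bnd[OF a_smooth(4)] by blast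
  note B = BDF_const[OF A1] BDF_const[OF A2] BDF_const[OF A3] BDF_const[OF A4]
  show "LIPF (Is \<times> UNIV) (\<lambda>i z. Ptr a1 a2 a3 a4 (fst i) (snd i) z)" unfolding Ptr_def
    by (intro LIPF_add LIPF_mult LIPF_const LIPF_sin LIPF_cos B BDF_sin BDF_cos)
  show "BDF (Is \<times> UNIV) (\<lambda>i z. Ptr a1 a2 a3 a4 (fst i) (snd i) z)" unfolding Ptr_def
    by (intro BDF_add BDF_mult B BDF_sin BDF_cos)
  show "LIPF (Is \<times> UNIV) (\<lambda>i z. Q1 a1 a2 a3 a4 (fst i) (snd i) z)" unfolding Q1_def
    by (intro LIPF_diff LIPF_mult LIPF_const LIPF_sin LIPF_cos B BDF_sin BDF_cos)
  show "BDF (Is \<times> UNIV) (\<lambda>i z. Q1 a1 a2 a3 a4 (fst i) (snd i) z)" unfolding Q1_def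
    by (intro BDF_diff BDF_mult B BDF_sin BDF_cos)
  show "LIPF (Is \<times> UNIV) (\<lambda>i z. Q2 a1 a2 a3 a4 (fst i) (snd i) z)" unfolding Q2_def
    by (intro LIPF_diff LIPF_mult LIPF_const LIPF_sin LIPF_cos B BDF_sin BDF_cos)
  show "BDF (Is \<times> UNIV) (\<lambda>i z. Q2 a1 a2 a3 a4 (fst i) (snd i) z)" unfolding Q2_def
    by (intro BDF_diff BDF_mult B BDF_sin BDF_cos)
qed

lemma pd_eq: "pd f k = (\<lambda>x. frechet_derivative f (at x) (axis k 1))"
  by (simp add: pd_def fun_eq_iff)

lemma chi_LB: "LIPF I (\<lambda>i z. chi z)" "BDF I (\<lambda>i z. chi z)"
  "LIPF I (\<lambda>i z. pd chi k z)" "BDF I (\<lambda>i z. pd chi k z)"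
proof -
  obtain L where "\<forall>p q. \<bar>chi p - chi q\<bar> \<le> L * norm (p - q)" using SPL[OF chi_smooth chi_per] by blast
  then show "LIPF I (\<lambda>i z. chi z)" by (intro LIPF_fixed) blast
  obtain B where "\<forall>p. \<bar>chi p\<bar> \<le> B" using SPB[OF chi_smooth chi_per] by blast
  then show "BDF I (\<lambda>i z. chi z)" by (intro BDF_fixed) blast
  have sm: "smooth_fun (pd chi k)" unfolding pd_eq by (rule smooth_pd[OF chi_smooth])
  have pe: "periodic_fun (pd chi k)" unfolding pd_eq by (rule periodic_pd[OF chi_smooth chi_per])
  obtain L2 where "\<forall>p q. \<bar>pd chi k p - pd chi k q\<bar> \<le> L2 * norm (p - q)" using SPL[OF sm pe] by blast
  then show "LIPF I (\<lambda>i z. pd chi k z)" by (intro LIPF_fixed) blast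
  obtain B2 where "\<forall>p. \<bar>pd chi k p\<bar> \<le> B2" using SPB[OF sm pe] by blast
  then show "BDF I (\<lambda>i z. pd chi k z)" by (intro BDF_fixed) blast
qed

lemma G_lip: "\<exists>K. \<forall>i\<in>Is \<times> UNIV. \<forall>p q. norm (G i p - G i q) \<le> K * norm (p - q)"
  unfolding Gv_def
  by (rule vec_lip) (intro LIPF_add LIPF_neg LIPF_mult LP BP LQ1 BQ1 LQ2 BQ2 chi_LB BDF_add BDF_neg BDF_mult)+

lemma G_bd: "\<exists>B. \<forall>i\<in>Is \<times> UNIV. \<forall>p. norm (G i p) \<le> B"
  unfolding Gv_def
  by (rule vec_bd) (intro BDF_add BDF_neg BDF_mult BP BQ1 BQ2 chi_LB)+

lemma H_lip: "\<exists>K. \<forall>i\<in>Is \<times> UNIV. \<forall>p q. norm (H i p - H i q) \<le> K * norm (p - q)"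
  unfolding Hv_def
  by (rule vec_lip) (intro LIPF_neg LQ1 LQ2)+

lemma H_bd: "\<exists>B. \<forall>i\<in>Is \<times> UNIV. \<forall>p. norm (H i p) \<le> B"
  unfolding Hv_def
  by (rule vec_bd) (intro BDF_neg BQ1 BQ2)+

abbreviation "F \<equiv> (\<lambda>p::(real^2) \<times> real. ybar (fst p) (snd p))"

lemma F_cont: "continuous_on UNIV F" by (rule smooth_cont_on[OF ybar_smooth])

lemma ybar_zero: "t \<le> 0 \<Longrightarrow> ybar p t = 0"
  using ybar_compact(1,4) by simp

lemma ybar_bnd: "\<exists>B. \<forall>p t. norm (ybar p t) \<le> B"
proof -
  obtain B where B: "\<forall>y. \<forall>t\<in>{ya..yb}. norm (F (y, t)) \<le> B"
    using bounded_periodic[OF F_cont _ compact_Icc] ybar_per unfolding periodic_fun_def by force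
  have "norm (ybar p t) \<le> max B 0" for p t
  proof (cases "t \<in> {ya..yb}")
    case True
    then have "norm (F (p, t)) \<le> B" using B by blast
    then show ?thesis by simp
  next
    case False then show ?thesis using ybar_compact(4) by simp
  qed
  then show ?thesis by blast
qed

lemma ybar_lip: "\<exists>K. \<forall>t p q. norm (ybar p t - ybar q t) \<le> K * norm (p - q)"
proof -
  define DF where "DF p = frechet_derivative F (at p)" for p
  have Fd: "(F has_derivative DF p) (at p)" for p unfolding DF_def by (rule smooth_hasderiv[OF ybar_smooth])
  have gb: "\<exists>B. \<forall>y. \<forall>t\<in>{ya..yb}. norm ((\<lambda>p. DF p (axis j 1, 0)) (y, t)) \<le> B" for j
  proof (rule bounded_periodic[OF _ _ compact_Icc])
    show "continuous_on UNIV (\<lambda>p. DF p (axis j 1, 0))" unfolding DF_def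
      by (rule smooth_cont_on[OF smooth_pd[OF ybar_smooth]])
    fix y t v assume v: "v \<in> lat2"
    have "frechet_derivative F (at ((y, t) + (v, 0))) = frechet_derivative F (at (y, t))"
    proof (rule deriv_transl)
      show "F (p + (v, 0)) = F p" for p using ybar_per v unfolding periodic_fun_def by simp
      show "F differentiable at ((y, t) + (v, 0))" by (rule smooth_diff[OF ybar_smooth])
    qed
    then show "DF (y + v, t) (axis j 1, 0) = DF (y, t) (axis j 1, 0)" unfolding DF_def by simp
  qed
  obtain B1 where B1: "\<forall>y. \<forall>t\<in>{ya..yb}. norm (DF (y, t) (axis 1 1, 0)) \<le> B1" using gb[of 1] by auto
  obtain B2 where B2: "\<forall>y. \<forall>t\<in>{ya..yb}. norm (DF (y, t) (axis 2 1, 0)) \<le> B2" using gb[of 2] by auto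
  have main: "norm (ybar p t - ybar q t) \<le> (2 * max (max B1 B2) 0) * norm (p - q)" for t p q
  proof (cases "t \<in> {ya..yb}")
    case False
    then show ?thesis using ybar_compact(4) by simp
  next
    case True
    have d: "((\<lambda>y. ybar y t) has_derivative (\<lambda>h. DF (y, t) (h, 0))) (at y)" for y
    proof -
      have p: "((\<lambda>y. (y, t)) has_derivative (\<lambda>h. (h, 0))) (at y)"
        by (auto intro!: derivative_eq_intros)
      from has_derivative_compose[OF p Fd[of "(y, t)"]] show ?thesis by simp
    qed
    have b: "norm (DF (y, t) (axis j 1, 0)) \<le> max (max B1 B2) 0" for y j
    proof -
      have "j = 1 \<or> j = 2" by (rule exhaust_2)
      moreover have "norm (DF (y, t) (axis 1 1, 0)) \<le> max B1 B2" using B1 True max.cobounded1[of B1 B2] by (meson order_trans)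
      moreover have "norm (DF (y, t) (axis 2 1, 0)) \<le> max B1 B2" using B2 True max.cobounded2[of B2 B1] by (meson order_trans)
      ultimately show ?thesis by auto
    qed
    show ?thesis by (rule lip_deriv2[OF d b])
  qed
  then show ?thesis by blast
qed

lemma ybar_cont_path: "continuous_on A \<phi> \<Longrightarrow> continuous_on A (\<lambda>r. ybar (\<phi> r) r)"
proof -
  assume c: "continuous_on A \<phi>"
  have "continuous_on A (\<lambda>r. F (\<phi> r, r))"
    by (rule continuous_on_compose2[OF F_cont]) (auto intro: continuous_on_Pair c continuous_on_id)
  then show ?thesis by simp
qed

lemma ybar_exist: "\<exists>\<phi>. is_sol UNIV ybar p 0 \<phi>"
proof -
  obtain K where K: "\<forall>t p q. norm (ybar p t - ybar q t) \<le> K * norm (p - q)" using ybar_lip by blast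
  obtain B where B: "\<forall>p t. norm (ybar p t) \<le> B" using ybar_bnd by blast
  have K1: "0 < max K 0 + 1" by simp
  show ?thesis
  proof (rule exist_UNIV[OF K1])
    fix t p q show "norm (ybar p t - ybar q t) \<le> (max K 0 + 1) * norm (p - q)"
      using K[rule_format, of p t q] by (smt (verit) mult_right_mono norm_ge_zero)
  next
    fix t show "norm (ybar p t) \<le> B" using B by blast
  next
    fix \<phi> :: "real \<Rightarrow> real^2" and T :: real assume "0 \<le> T" "continuous_on {0..T} \<phi>"
    then show "(\<lambda>r. ybar (\<phi> r) r) integrable_on {0..T}"
      by (intro integrable_continuous_real ybar_cont_path)
  next
    fix p :: "real^2" and t :: real assume "t \<le> 0" then show "ybar p t = 0" by (rule ybar_zero)
  qed
qed

lemma U_form: "U p t = ybar p t + (\<Sum>j\<in>{1..M}. if t \<in> {ta j..tb j} then G (t - ta j, S j) p else 0)"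
proof -
  have "indicator {ta j..tb j} t *\<^sub>R perp_grad (\<lambda>z. chi z * phistar (z - S j) (t - ta j)) p
        = (if t \<in> {ta j..tb j} then G (t - ta j, S j) p else 0)" for j
  proof (cases "t \<in> {ta j..tb j}")
    case True
    then have "t - ta j \<in> Is" using tb_eq[of j] by simp
    then show ?thesis using True G_eq by simp
  qed (auto simp: indicator_def)
  then show ?thesis unfolding U_def by simp
qed

lemma step_sub: "j \<ge> 1 \<Longrightarrow> {ta j..tb j} \<subseteq> {tc (j - 1)..tc j}"
proof -
  assume j: "j \<ge> 1"
  have "real (j - 1) = real j - 1" using j by simp
  then show ?thesis unfolding ta_def tb_def tc_def using Tpos by (auto simp: algebra_simps)
qed

lemma step_disj:
  assumes "j \<ge> 1" "k \<ge> 1" "j \<noteq> k" "t \<in> {tc (j - 1)..tc j}"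
  shows "t \<notin> {ta k..tb k}"
proof -
  have rj: "real (j - 1) = real j - 1" using assms by simp
  consider "k \<ge> j + 1" | "k + 1 \<le> j" using assms(3) by linarith
  then show ?thesis
  proof cases
    case 1
    then have "real k \<ge> real j + 1" by simp
    then have "3 * real j < 3 * real k - 2" by (simp add: algebra_simps)
    then have "(3 * real j) * Tstar < (3 * real k - 2) * Tstar" using Tpos by (rule mult_strict_right_mono)
    then have "ta k > tc j" unfolding ta_def tc_def by simp
    then show ?thesis using assms(4) by simp
  next
    case 2
    then have "real k + 1 \<le> real j" by simp
    then have "3 * real k - 1 < 3 * (real j - 1)" by (simp add: algebra_simps)
    then have "(3 * real k - 1) * Tstar < 3 * (real j - 1) * Tstar" using Tpos by (rule mult_strict_right_mono)
    then have "tb k < tc (j - 1)" unfolding tb_def tc_def rj by simp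
    then show ?thesis using assms(4) by simp
  qed
qed

lemma U_step: "i \<in> {1..M} \<Longrightarrow> \<tau> \<in> Is \<Longrightarrow> U p (ta i + \<tau>) = G (\<tau>, S i) p"
proof -
  assume i: "i \<in> {1..M}" and tau: "\<tau> \<in> Is"
  have ti: "ta i + \<tau> \<in> {ta i..tb i}" using tau tb_eq[of i] by simp
  have z: "ybar p (ta i + \<tau>) = 0" by (rule ybar_vanish[OF i ti])
  have o: "(if ta i + \<tau> \<in> {ta j..tb j} then G (ta i + \<tau> - ta j, S j) p else 0) = 0" if j: "j \<in> {1..M} - {i}" for j
  proof -
    have "ta i + \<tau> \<in> {tc (i - 1)..tc i}" using step_sub[of i] i ti by auto
    then have "ta i + \<tau> \<notin> {ta j..tb j}" using step_disj[of i j] i j by auto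
    then show ?thesis by auto
  qed
  have s0: "(\<Sum>j\<in>{1..M} - {i}. if ta i + \<tau> \<in> {ta j..tb j} then G (ta i + \<tau> - ta j, S j) p else 0) = 0"
    by (rule sum.neutral) (use o in blast)
  have "(\<Sum>j\<in>{1..M}. if ta i + \<tau> \<in> {ta j..tb j} then G (ta i + \<tau> - ta j, S j) p else 0)
      = (if ta i + \<tau> \<in> {ta i..tb i} then G (ta i + \<tau> - ta i, S i) p else 0)
       + (\<Sum>j\<in>{1..M} - {i}. if ta i + \<tau> \<in> {ta j..tb j} then G (ta i + \<tau> - ta j, S j) p else 0)"
    by (rule sum.remove[OF finite_atLeastAtMost i])
  then have "(\<Sum>j\<in>{1..M}. if ta i + \<tau> \<in> {ta j..tb j} then G (ta i + \<tau> - ta j, S j) p else 0)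
      = (if ta i + \<tau> \<in> {ta i..tb i} then G (ta i + \<tau> - ta i, S i) p else 0)"
    unfolding s0 by simp
  then show ?thesis unfolding U_form z using ti by simp
qed

lemma U_zero: "t \<le> 0 \<Longrightarrow> U p t = 0"
proof -
  assume t: "t \<le> 0"
  have "t \<notin> {ta j..tb j}" if "j \<in> {1..M}" for j using ta_pos[of j] that t by simp
  then show ?thesis unfolding U_form ybar_zero[OF t] by (auto intro!: sum.neutral)
qed

lemma U_ybar: "t \<in> {tc (j - 1)..tc j} \<Longrightarrow> j \<ge> 1 \<Longrightarrow> t \<notin> {ta j..tb j} \<Longrightarrow> U p t = ybar p t"
proof -
  assume t: "t \<in> {tc (j - 1)..tc j}" and j: "j \<ge> 1" and nt: "t \<notin> {ta j..tb j}"
  have "t \<notin> {ta k..tb k}" if "k \<in> {1..M}" for k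
    using step_disj[OF j _ _ t, of k] that nt by (cases "k = j") auto
  then show ?thesis unfolding U_form by (auto intro!: sum.neutral)
qed

lemma U_before: "t \<le> tc0 \<Longrightarrow> U p t = ybar p t"
proof -
  assume t: "t \<le> tc0"
  have "t \<notin> {ta k..tb k}" if "k \<in> {1..M}" for k
  proof -
    have "1 \<le> real k" using that by simp
    then have "0 < (3 * real k - 2) * Tstar" using Tpos by simp
    then show ?thesis unfolding ta_def using t by simp
  qed
  then show ?thesis unfolding U_form by (auto intro!: sum.neutral)
qed

lemma U_lip: "\<exists>K>0. \<forall>t p q. norm (U p t - U q t) \<le> K * norm (p - q)"
proof -
  obtain Ky where Ky: "\<forall>t p q. norm (ybar p t - ybar q t) \<le> Ky * norm (p - q)" using ybar_lip by blast
  obtain KG where KG: "\<forall>i\<in>Is \<times> UNIV. \<forall>p q. norm (G i p - G i q) \<le> KG * norm (p - q)" using G_lip by blast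
  define K where "K = max Ky 0 + real M * max KG 0 + 1"
  have "0 \<le> max Ky 0" "0 \<le> real M * max KG 0" by simp_all
  then have K0: "K > 0" unfolding K_def by linarith
  have "norm (U p t - U q t) \<le> K * norm (p - q)" for t p q
  proof -
    define g where "g p j = (if t \<in> {ta j..tb j} then G (t - ta j, S j) p else 0)" for p j
    have gj: "norm (g p j - g q j) \<le> max KG 0 * norm (p - q)" for j
    proof (cases "t \<in> {ta j..tb j}")
      case True
      then have "(t - ta j, S j) \<in> Is \<times> UNIV" using tb_eq[of j] by simp
      then have "norm (G (t - ta j, S j) p - G (t - ta j, S j) q) \<le> KG * norm (p - q)" using KG by blast
      also have "\<dots> \<le> max KG 0 * norm (p - q)" by (simp add: mult_right_mono)
      finally show ?thesis unfolding g_def using True by simp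
    qed (auto simp: g_def)
    have "U p t - U q t = (ybar p t - ybar q t) + (\<Sum>j\<in>{1..M}. g p j - g q j)"
      unfolding U_form g_def[symmetric] by (simp add: sum_subtractf)
    then have "norm (U p t - U q t) \<le> norm (ybar p t - ybar q t) + norm (\<Sum>j\<in>{1..M}. g p j - g q j)"
      by (simp add: norm_triangle_ineq)
    also have "\<dots> \<le> max Ky 0 * norm (p - q) + (\<Sum>j\<in>{1..M}. max KG 0 * norm (p - q))"
    proof (rule add_mono)
      show "norm (ybar p t - ybar q t) \<le> max Ky 0 * norm (p - q)"
        using Ky[rule_format, of p t q] by (smt (verit) mult_right_mono norm_ge_zero)
      show "norm (\<Sum>j\<in>{1..M}. g p j - g q j) \<le> (\<Sum>j\<in>{1..M}. max KG 0 * norm (p - q))"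
        by (rule sum_norm_le) (rule gj)
    qed
    also have "\<dots> = (max Ky 0 + real M * max KG 0) * norm (p - q)" by (simp add: algebra_simps)
    also have "\<dots> \<le> K * norm (p - q)" unfolding K_def by (simp add: mult_right_mono)
    finally show ?thesis .
  qed
  then show ?thesis using K0 by blast
qed

lemma U_bnd: "\<exists>B. \<forall>t. norm (U p t) \<le> B"
proof -
  obtain By where By: "\<forall>p t. norm (ybar p t) \<le> By" using ybar_bnd by blast
  obtain BG where BG: "\<forall>i\<in>Is \<times> UNIV. \<forall>p. norm (G i p) \<le> BG" using G_bd by blast
  have "norm (U p t) \<le> By + real M * max BG 0" for t
  proof -
    have gj: "norm (if t \<in> {ta j..tb j} then G (t - ta j, S j) p else 0) \<le> max BG 0" for j
    proof (cases "t \<in> {ta j..tb j}")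
      case True
      then have "(t - ta j, S j) \<in> Is \<times> UNIV" using tb_eq[of j] by simp
      then have "norm (G (t - ta j, S j) p) \<le> BG" using BG by blast
      then show ?thesis using True by simp
    qed auto
    have "norm (U p t) \<le> norm (ybar p t) + norm (\<Sum>j\<in>{1..M}. if t \<in> {ta j..tb j} then G (t - ta j, S j) p else 0)"
      unfolding U_form by (rule norm_triangle_ineq)
    also have "\<dots> \<le> By + (\<Sum>j\<in>{1..M}. max BG 0)"
      by (rule add_mono) (use By in blast, rule sum_norm_le, rule gj)
    finally show ?thesis by simp
  qed
  then show ?thesis by blast
qed

lemma G_cont_path: "continuous_on A \<phi> \<Longrightarrow> continuous_on A (\<lambda>r. G (r - c', S') (\<phi> r))"
proof -
  assume c: "continuous_on A \<phi>"
  have cchi: "continuous_on A (\<lambda>r. chi (\<phi> r))"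
    by (rule continuous_on_compose2[OF smooth_cont_on[OF chi_smooth, of UNIV] c]) simp
  have cpd: "continuous_on A (\<lambda>r. pd chi k (\<phi> r))" for k
  proof -
    have "smooth_fun (pd chi k)" unfolding pd_eq by (rule smooth_pd[OF chi_smooth])
    then show ?thesis by (rule continuous_on_compose2[OF smooth_cont_on[where S=UNIV] c]) simp
  qed
  have ca: "continuous_on A (\<lambda>r. a (r - c'))" if sa: "smooth_fun a" for a :: "real \<Rightarrow> real"
    by (rule continuous_on_compose2[OF smooth_cont_on[OF sa, of UNIV]]) (auto intro!: continuous_intros)
  note cs = cchi cpd ca[OF a_smooth(1)] ca[OF a_smooth(2)] ca[OF a_smooth(3)] ca[OF a_smooth(4)] c
  show ?thesis unfolding Gv_def Ptr_def Q1_def Q2_def fst_conv snd_conv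
  proof (rule continuous_on_vec_lambda)
    fix j :: 2 show "continuous_on A (\<lambda>x. if j = 1 then - (pd chi 2 (\<phi> x) * (a1 (x - c') * sin (\<phi> x $ 1 - S' $ 1) + a2 (x - c') * sin (\<phi> x $ 2 - S' $ 2) + a3 (x - c') * cos (\<phi> x $ 1 - S' $ 1) + a4 (x - c') * cos (\<phi> x $ 2 - S' $ 2)) + chi (\<phi> x) * (a2 (x - c') * cos (\<phi> x $ 2 - S' $ 2) - a4 (x - c') * sin (\<phi> x $ 2 - S' $ 2)))
        else pd chi 1 (\<phi> x) * (a1 (x - c') * sin (\<phi> x $ 1 - S' $ 1) + a2 (x - c') * sin (\<phi> x $ 2 - S' $ 2) + a3 (x - c') * cos (\<phi> x $ 1 - S' $ 1) + a4 (x - c') * cos (\<phi> x $ 2 - S' $ 2)) + chi (\<phi> x) * (a1 (x - c') * cos (\<phi> x $ 1 - S' $ 1) - a3 (x - c') * sin (\<phi> x $ 1 - S' $ 1)))"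
      by (cases "j = 1") (simp_all, (intro continuous_intros cs)+)
  qed
qed

lemma H_cont_path: "continuous_on A \<phi> \<Longrightarrow> continuous_on A (\<lambda>r. H (r, S') (\<phi> r))"
proof -
  assume c: "continuous_on A \<phi>"
  have ca: "continuous_on A (\<lambda>r. a r)" if sa: "smooth_fun a" for a :: "real \<Rightarrow> real"
    by (rule smooth_cont_on[OF sa])
  note cs = ca[OF a_smooth(1)] ca[OF a_smooth(2)] ca[OF a_smooth(3)] ca[OF a_smooth(4)] c
  show ?thesis unfolding Hv_def Q1_def Q2_def fst_conv snd_conv
  proof (rule continuous_on_vec_lambda)
    fix j :: 2 show "continuous_on A (\<lambda>x. if j = 1 then - (a2 x * cos (\<phi> x $ 2 - S' $ 2) - a4 x * sin (\<phi> x $ 2 - S' $ 2))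
        else a1 x * cos (\<phi> x $ 1 - S' $ 1) - a3 x * sin (\<phi> x $ 1 - S' $ 1))"
      by (cases "j = 1") (simp_all, (intro continuous_intros cs)+)
  qed
qed

lemma U_int: "continuous_on {0..T} \<phi> \<Longrightarrow> (\<lambda>r. U (\<phi> r) r) integrable_on {0..T}"
proof -
  assume c: "continuous_on {0..T} \<phi>"
  have iy: "(\<lambda>r. ybar (\<phi> r) r) integrable_on {0..T}"
    by (intro integrable_continuous_real ybar_cont_path c)
  have ij: "(\<lambda>r. if r \<in> {ta j..tb j} then G (r - ta j, S j) (\<phi> r) else 0) integrable_on {0..T}" for j
  proof -
    have cc: "continuous_on ({ta j..tb j} \<inter> {0..T}) (\<lambda>r. G (r - ta j, S j) (\<phi> r))"
      by (rule G_cont_path[OF continuous_on_subset[OF c]]) auto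
    have e: "{ta j..tb j} \<inter> {0..T} = {max (ta j) 0..min (tb j) T}" by auto
    have "(\<lambda>r. G (r - ta j, S j) (\<phi> r)) integrable_on ({ta j..tb j} \<inter> {0..T})"
      unfolding e by (rule integrable_continuous_real) (use cc e in simp)
    then show ?thesis by (rule integrable_restrict_Int[THEN iffD2])
  qed
  have "(\<lambda>r. ybar (\<phi> r) r + (\<Sum>j\<in>{1..M}. if r \<in> {ta j..tb j} then G (r - ta j, S j) (\<phi> r) else 0)) integrable_on {0..T}"
    by (intro integrable_add iy integrable_sum ij) simp
  then show ?thesis unfolding U_form .
qed

lemma U_exist: "\<exists>\<phi>. is_sol UNIV U p 0 \<phi>"
proof -
  obtain K where K: "K > 0" "\<forall>t p q. norm (U p t - U q t) \<le> K * norm (p - q)" using U_lip by blast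
  obtain B where B: "\<forall>t. norm (U p t) \<le> B" using U_bnd by blast
  show ?thesis
  proof (rule exist_UNIV[OF K(1)])
    fix t and p' q' :: "real^2" show "norm (U p' t - U q' t) \<le> K * norm (p' - q')" using K(2) by blast
  next
    fix t show "norm (U p t) \<le> B" using B by blast
  next
    fix \<phi> :: "real \<Rightarrow> real^2" and T :: real assume "0 \<le> T" "continuous_on {0..T} \<phi>"
    then show "(\<lambda>r. U (\<phi> r) r) integrable_on {0..T}" by (intro U_int)
  next
    fix p' :: "real^2" and t :: real assume "t \<le> 0" then show "U p' t = 0" by (rule U_zero)
  qed
qed

lemma tc_sum: "j \<ge> 1 \<Longrightarrow> tc (j - 1) + tc j = ta j + tb j"
proof -
  assume "j \<ge> 1"
  then have "real (j - 1) = real j - 1" by simp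
  then show ?thesis unfolding tc_def ta_def tb_def by (simp add: algebra_simps)
qed

lemma tc_len: "j \<ge> 1 \<Longrightarrow> tc j - tc (j - 1) = 3 * Tstar"
proof -
  assume "j \<ge> 1"
  then have "real (j - 1) = real j - 1" by simp
  then show ?thesis unfolding tc_def by (simp add: algebra_simps)
qed

lemma ybar_odd': 
  assumes j: "j \<in> {1..M}" and t: "t \<in> {tc (j - 1)..tc j}"
  shows "ybar p (tc (j - 1) + tc j - t) = - ybar p t"
proof -
  define m where "m = (tc (j - 1) + tc j) / 2"
  have l: "tc j - tc (j - 1) = 3 * Tstar" using tc_len j by simp
  have rj: "real (j - 1) = real j - 1" using j by simp
  have md: "m = tc (j - 1) + 3 * Tstar / 2" unfolding m_def tc_def rj by (simp add: field_simps)
  have "m - t \<le> 3 * Tstar / 2" "-(3 * Tstar / 2) \<le> m - t" using t l md by auto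
  then have "\<bar>m - t\<bar> \<le> 3 * Tstar / 2" by linarith
  from ybar_odd[OF j this, of p] have "ybar p (m + (m - t)) = - ybar p (m - (m - t))" unfolding m_def by simp
  then show ?thesis unfolding m_def by (simp add: algebra_simps)
qed

lemma U_odd:
  assumes j: "j \<in> {1..M}" and t: "t \<in> {tc (j - 1)..tc j}"
  shows "U p (tc (j - 1) + tc j - t) = - U p t"
proof -
  define t' where "t' = tc (j - 1) + tc j - t"
  have j1: "j \<ge> 1" using j by simp
  have t': "t' \<in> {tc (j - 1)..tc j}" using t unfolding t'_def by simp
  have sum: "tc (j - 1) + tc j = ta j + tb j" by (rule tc_sum[OF j1])
  have g: "(if t' \<in> {ta k..tb k} then G (t' - ta k, S k) p else 0) = - (if t \<in> {ta k..tb k} then G (t - ta k, S k) p else 0)"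
    if k: "k \<in> {1..M}" for k
  proof (cases "k = j")
    case False
    have "t \<notin> {ta k..tb k}" using step_disj[OF j1 _ _ t, of k] k False by auto
    moreover have "t' \<notin> {ta k..tb k}" using step_disj[OF j1 _ _ t', of k] k False by auto
    ultimately show ?thesis by auto
  next
    case True
    show ?thesis
    proof (cases "t \<in> {ta j..tb j}")
      case tin: True
      then have t'in: "t' \<in> {ta j..tb j}" unfolding t'_def sum by auto
      have tau: "t - ta j \<in> Is" using tin tb_eq[of j] by simp
      have e: "t' - ta j = Tstar - (t - ta j)" unfolding t'_def sum tb_eq by simp
      have "G (t' - ta j, S j) p = - G (t - ta j, S j) p" unfolding e by (rule G_odd[OF tau])
      then show ?thesis using True tin t'in by simp
    next
      case tout: False
      then have "t' \<notin> {ta j..tb j}" unfolding t'_def sum by auto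
      then show ?thesis using True tout by auto
    qed
  qed
  have sc: "(\<Sum>k\<in>{1..M}. if t' \<in> {ta k..tb k} then G (t' - ta k, S k) p else 0)
     = (\<Sum>k\<in>{1..M}. - (if t \<in> {ta k..tb k} then G (t - ta k, S k) p else 0))"
    by (rule sum.cong[OF refl g])
  have "U p t' = ybar p t' + (\<Sum>k\<in>{1..M}. - (if t \<in> {ta k..tb k} then G (t - ta k, S k) p else 0))"
    unfolding U_form sc ..
  also have "\<dots> = - U p t" unfolding U_form t'_def ybar_odd'[OF j t] by (simp add: sum_negf)
  finally show ?thesis unfolding t'_def .
qed

lemma YU:
  assumes sU: "sol2 UNIV U \<phi>U" and sY: "sol2 UNIV ybar \<phi>Y" and e0: "\<phi>U 0 = \<phi>Y 0"
    and i: "i \<in> {1..M}"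
  shows "\<phi>U (ta i) = \<phi>Y (ta i)"
proof -
  obtain KU where KU: "KU > 0" "\<forall>t p q. norm (U p t - U q t) \<le> KU * norm (p - q)" using U_lip by blast
  obtain Ky0 where Ky0: "\<forall>t p q. norm (ybar p t - ybar q t) \<le> Ky0 * norm (p - q)" using ybar_lip by blast
  define Ky where "Ky = max Ky0 0 + 1"
  have Ky: "Ky > 0" "\<forall>t p q. norm (ybar p t - ybar q t) \<le> Ky * norm (p - q)"
  proof -
    show "Ky > 0" unfolding Ky_def by (smt (verit) max.cobounded2)
    show "\<forall>t p q. norm (ybar p t - ybar q t) \<le> Ky * norm (p - q)"
    proof (intro allI)
      fix t p q
      have "Ky0 \<le> Ky" unfolding Ky_def by simp
      then show "norm (ybar p t - ybar q t) \<le> Ky * norm (p - q)"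
        using Ky0[rule_format, of p t q] by (smt (verit) mult_right_mono norm_ge_zero)
    qed
  qed
  have tc0pos: "0 \<le> tc0" using tc0(1) by simp
  have s1: "sol2 {0..tc0} ybar \<phi>U"
    by (rule sol2_cong_spike[OF sol2_mono[OF sU] _ finite.emptyI]) (auto simp: U_before)
  have s2: "sol2 {0..tc0} ybar \<phi>Y" by (rule sol2_mono[OF sY]) simp
  have a0: "\<phi>U tc0 = \<phi>Y tc0"
    by (rule uniq_fwd[OF tc0pos Ky(1) _ s1 s2 e0]) (use Ky(2) tc0pos in auto)
  have stepU: "\<phi>U (tc j) = \<phi>U (tc (j - 1))" if j: "j \<in> {1..M}" for j
  proof (rule rev_ident[OF _ KU(1)])
    show "tc (j - 1) \<le> tc j" using tc_len[of j] j Tpos by simp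
    show "norm (U p t - U q t) \<le> KU * norm (p - q)" for t p q using KU(2) by blast
    show "U p (tc (j - 1) + tc j - t) = - U p t" if "t \<in> {tc (j - 1)..tc j}" for p t by (rule U_odd[OF j that])
    show "sol2 {tc (j - 1)..tc j} U \<phi>U" by (rule sol2_mono[OF sU]) simp
  qed
  have stepY: "\<phi>Y (tc j) = \<phi>Y (tc (j - 1))" if j: "j \<in> {1..M}" for j
  proof (rule rev_ident[OF _ Ky(1)])
    show "tc (j - 1) \<le> tc j" using tc_len[of j] j Tpos by simp
    show "norm (ybar p t - ybar q t) \<le> Ky * norm (p - q)" for t p q using Ky(2) by blast
    show "ybar p (tc (j - 1) + tc j - t) = - ybar p t" if "t \<in> {tc (j - 1)..tc j}" for p t by (rule ybar_odd'[OF j that])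
    show "sol2 {tc (j - 1)..tc j} ybar \<phi>Y" by (rule sol2_mono[OF sY]) simp
  qed
  have tc00: "tc 0 = tc0" unfolding tc_def by simp
  have all: "\<phi>U (tc j) = \<phi>Y (tc j)" if "j \<le> M" for j
    using that
  proof (induction j)
    case 0 then show ?case using a0 tc00 by simp
  next
    case (Suc j)
    have "Suc j \<in> {1..M}" using Suc.prems by simp
    then show ?case using stepU[of "Suc j"] stepY[of "Suc j"] Suc by simp
  qed
  have i1: "i \<ge> 1" using i by simp
  have le: "tc (i - 1) \<le> ta i"
  proof -
    have "real (i - 1) = real i - 1" using i1 by simp
    then show ?thesis unfolding tc_def ta_def using Tpos by (simp add: algebra_simps)
  qed
  have sub: "{tc (i - 1)..ta i} \<subseteq> {tc (i - 1)..tc i}" using step_sub[OF i1] tb_eq[of i] Tpos by auto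
  have s3: "sol2 {tc (i - 1)..ta i} ybar \<phi>U"
  proof (rule sol2_cong_spike[OF sol2_mono[OF sU] _ finite.insertI[OF finite.emptyI, of "ta i"]])
    fix t assume t: "t \<in> {tc (i - 1)..ta i}" "t \<notin> {ta i}"
    then have "t \<notin> {ta i..tb i}" by auto
    then show "U (\<phi>U t) t = ybar (\<phi>U t) t" using U_ybar[OF _ i1] t sub by auto
  qed auto
  have s4: "sol2 {tc (i - 1)..ta i} ybar \<phi>Y" by (rule sol2_mono[OF sY]) simp
  have "i \<le> M" using i by simp
  then have "i - 1 \<le> M" by linarith
  then have st: "\<phi>U (tc (i - 1)) = \<phi>Y (tc (i - 1))" by (rule all)
  show ?thesis
    by (rule uniq_fwd[OF le Ky(1) _ s3 s4 st]) (use Ky(2) le in auto)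
qed

abbreviation "vG S' \<equiv> (\<lambda>z \<tau>. perp_grad (\<lambda>w. chi w * phistar (w - S') \<tau>) z)"
abbreviation "vH S' \<equiv> (\<lambda>z \<tau>. ustar (z - S') \<tau>)"
abbreviation "N \<equiv> {y. infdist y (tsquare c0 L) < r}"

lemma Kmono: "norm x \<le> K * norm y \<Longrightarrow> norm x \<le> (max K 0 + 1) * norm y"
proof -
  assume a: "norm x \<le> K * norm y"
  have "K \<le> max K 0 + 1" by simp
  then have "K * norm y \<le> (max K 0 + 1) * norm y" by (rule mult_right_mono) simp
  then show ?thesis using a by linarith
qed

lemma Kpos: "max K 0 + 1 > (0::real)"
proof -
  have "0 \<le> max K 0" by simp
  then show ?thesis by linarith
qed

lemma vG_lip: "\<exists>K>0. \<forall>t\<in>Is. \<forall>p q. norm (vG S' p t - vG S' q t) \<le> K * norm (p - q)"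
proof -
  obtain K where K: "\<forall>i\<in>Is \<times> UNIV. \<forall>p q. norm (G i p - G i q) \<le> K * norm (p - q)" using G_lip by blast
  have "norm (vG S' p t - vG S' q t) \<le> (max K 0 + 1) * norm (p - q)" if t: "t \<in> Is" for t p q
  proof -
    have "norm (G (t, S') p - G (t, S') q) \<le> K * norm (p - q)" using K t by blast
    then show ?thesis using G_eq[OF t] Kmono by simp
  qed
  moreover have "max K 0 + 1 > 0" by (rule Kpos)
  ultimately show ?thesis by blast
qed

lemma vH_lip: "\<exists>K>0. \<forall>t\<in>Is. \<forall>p q. norm (vH S' p t - vH S' q t) \<le> K * norm (p - q)"
proof -
  obtain K where K: "\<forall>i\<in>Is \<times> UNIV. \<forall>p q. norm (H i p - H i q) \<le> K * norm (p - q)" using H_lip by blast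
  have "norm (vH S' p t - vH S' q t) \<le> (max K 0 + 1) * norm (p - q)" if t: "t \<in> Is" for t p q
  proof -
    have "norm (H (t, S') p - H (t, S') q) \<le> K * norm (p - q)" using K t by blast
    then show ?thesis using H_eq[OF t] Kmono by simp
  qed
  moreover have "max K 0 + 1 > 0" by (rule Kpos)
  ultimately show ?thesis by blast
qed

lemma vH_exist: "\<exists>\<phi>. is_sol Is (vH S') p 0 \<phi>"
proof -
  obtain K where K: "K > 0" "\<forall>t\<in>Is. \<forall>p q. norm (vH S' p t - vH S' q t) \<le> K * norm (p - q)" using vH_lip by blast
  obtain B where B: "\<forall>i\<in>Is \<times> UNIV. \<forall>p. norm (H i p) \<le> B" using H_bd by blast
  show ?thesis
  proof (rule exist_Icc[of 0 Tstar K])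
    show "0 \<le> Tstar" using Tpos by simp
    show "0 < K" by (rule K(1))
    show "norm (vH S' p' t - vH S' q' t) \<le> K * norm (p' - q')" if "t \<in> {0..Tstar}" for t p' q' using K(2) that by blast
    show "norm (vH S' p t) \<le> B" if t: "t \<in> {0..Tstar}" for t
    proof -
      have "(t, S') \<in> Is \<times> UNIV" using t by simp
      then have "norm (H (t, S') p) \<le> B" using B by blast
      then show ?thesis using H_eq[OF t, of p S'] by simp
    qed
    fix \<phi> :: "real \<Rightarrow> real^2" and T :: real assume T: "0 \<le> T" "T \<le> Tstar" and c: "continuous_on {0..T} \<phi>"
    have "(\<lambda>r. H (r, S') (\<phi> r)) integrable_on {0..T}"
      by (rule integrable_continuous_real[OF H_cont_path[OF c]])
    then show "(\<lambda>r. vH S' (\<phi> r) r) integrable_on {0..T}"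
    proof (rule integrable_eq)
      fix r assume "r \<in> {0..T}"
      then have "r \<in> Is" using T by simp
      then show "H (r, S') (\<phi> r) = vH S' (\<phi> r) r" using H_eq by simp
    qed
  qed
qed

lemma loc: "y \<in> N \<Longrightarrow> \<tau> \<in> Is \<Longrightarrow> vG S' y \<tau> = vH S' y \<tau>"
proof -
  assume y: "y \<in> N" and t: "\<tau> \<in> Is"
  have o: "open N" by (rule open_N)
  have c1: "\<And>z. z \<in> N \<Longrightarrow> chi z = 1" using r_chi by simp
  have p1: "pd chi 1 y = 0" by (rule pd_zero_const[OF o y c1])
  have p2: "pd chi 2 y = 0" by (rule pd_zero_const[OF o y c1])
  have cy: "chi y = 1" using c1 y .
  have "G (\<tau>, S') y = H (\<tau>, S') y" unfolding Gv_def Hv_def fst_conv snd_conv p1 p2 cy mult_zero_left mult_1 add_0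
    by (rule refl)
  then show ?thesis using G_eq[OF t] H_eq[OF t] by simp
qed

lemma vH_per: "v \<in> lat2 \<Longrightarrow> \<tau> \<in> Is \<Longrightarrow> vH S' (p + v) \<tau> = vH S' p \<tau>"
proof -
  assume v: "v \<in> lat2" and t: "\<tau> \<in> Is"
  have e: "(p + v)$k - S'$k = (p$k - S'$k) + v$k" for k by simp
  have "H (\<tau>, S') (p + v) = H (\<tau>, S') p"
    unfolding Hv_def Q1_def Q2_def fst_conv snd_conv e lat2_sin[OF v] lat2_cos[OF v] ..
  then show ?thesis using H_eq[OF t] by simp
qed

lemma ybar_lipK: "\<exists>K>0. \<forall>t p q. norm (ybar p t - ybar q t) \<le> K * norm (p - q)"
proof -
  obtain K where K: "\<forall>t p q. norm (ybar p t - ybar q t) \<le> K * norm (p - q)" using ybar_lip by blast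
  have "norm (ybar p t - ybar q t) \<le> (max K 0 + 1) * norm (p - q)" for t p q
    using K[rule_format, of p t q] by (rule Kmono)
  moreover have "max K 0 + 1 > 0" by (rule Kpos)
  ultimately show ?thesis by blast
qed

lemma main:
  fixes x :: "real^2" and i :: nat
  assumes i_range: "i \<in> {1..M}"
    and hyp: "\<exists>s\<in>{0..Tstar}. \<mu> (flow UNIV U x 0 (ta i + s)) \<noteq> 0 \<or>
                              \<mu> (flow {0..Tstar} (\<lambda>z \<tau>. ustar (z - S i) \<tau>) (x + S i) 0 s) \<noteq> 0"
  shows "\<forall>t\<in>{0..Tstar}. torus_eq (flow UNIV U x 0 (ta i + t))
                                  (flow {0..Tstar} (\<lambda>z \<tau>. ustar (z - S i) \<tau>) (x + S i) 0 t)"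
proof -
  have IU: "is_interval (UNIV::real set)" by simp
  have II: "is_interval Is" by (rule is_interval_cc)
  obtain KU where KU: "KU > 0" "\<And>t p q. norm (U p t - U q t) \<le> KU * norm (p - q)" using U_lip by blast
  obtain Ky where Ky: "Ky > 0" "\<And>t p q. norm (ybar p t - ybar q t) \<le> Ky * norm (p - q)" using ybar_lipK by blast
  obtain KG where KG: "KG > 0" "\<And>t p q. t \<in> Is \<Longrightarrow> norm (vG (S i) p t - vG (S i) q t) \<le> KG * norm (p - q)"
    using vG_lip[of "S i"] by blast
  obtain KH where KH: "KH > 0" "\<And>t p q. t \<in> Is \<Longrightarrow> norm (vH (S i) p t - vH (S i) q t) \<le> KH * norm (p - q)"
    using vH_lip[of "S i"] by blast
  obtain \<phi>U where iU: "is_sol UNIV U x 0 \<phi>U" using U_exist by blast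
  obtain \<phi>H where iH: "is_sol Is (vH (S i)) (x + S i) 0 \<phi>H" using vH_exist by blast
  obtain \<phi>Y where iY: "is_sol UNIV ybar x 0 \<phi>Y" using ybar_exist by blast
  have fU: "flow UNIV U x 0 t = \<phi>U t" for t by (rule flow_eq[OF IU KU(1) KU(2) iU]) simp
  have fH: "flow Is (vH (S i)) (x + S i) 0 t = \<phi>H t" if "t \<in> Is" for t by (rule flow_eq[OF II KH(1) KH(2) iH that])
  have fY: "flow UNIV ybar x 0 t = \<phi>Y t" for t by (rule flow_eq[OF IU Ky(1) Ky(2) iY]) simp
  have sU: "sol2 UNIV U \<phi>U" by (rule is_sol_sol2[OF iU IU])
  have sH: "sol2 Is (vH (S i)) \<phi>H" by (rule is_sol_sol2[OF iH II])
  have sY: "sol2 UNIV ybar \<phi>Y" by (rule is_sol_sol2[OF iY IU])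
  have U0: "\<phi>U 0 = x" by (rule is_sol_start[OF iU])
  have H0: "\<phi>H 0 = x + S i" by (rule is_sol_start[OF iH])
  have Y0: "\<phi>Y 0 = x" by (rule is_sol_start[OF iY])
  define \<phi>G where "\<phi>G \<tau> = \<phi>U (ta i + \<tau>)" for \<tau>
  have sG: "sol2 Is (vG (S i)) \<phi>G"
  proof -
    have "sol2 {0..Tstar} (\<lambda>p \<tau>. U p (ta i + \<tau>)) (\<lambda>\<tau>. \<phi>U (ta i + \<tau>))"
      by (rule sol2_shift[OF sol2_mono[OF sU]]) simp
    then show ?thesis unfolding \<phi>G_def
      by (rule sol2_cong_spike[OF _ II finite.emptyI]) (simp add: U_step[OF i_range] G_eq)
  qed
  define w where "w = \<phi>U (ta i)"
  have G0: "\<phi>G 0 = w" unfolding \<phi>G_def w_def by simp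
  have wY: "\<phi>U (ta i) = \<phi>Y (ta i)" by (rule YU[OF sU sY _ i_range]) (simp add: U0 Y0)
  have Nper: "y + v \<in> N \<longleftrightarrow> y \<in> N" if vl: "v \<in> lat2" for y v
  proof -
    have "infdist (y + v) (tsquare c0 L) = infdist y (tsquare c0 L)" by (rule infdist_per[OF vl])
    then show ?thesis by simp
  qed
  have shiftd: "infdist (y - S i) (tsquare (c i) L) = infdist y (tsquare c0 L)" for y
  proof -
    have "infdist y ((\<lambda>y. y + S i) ` tsquare (c i) L) = infdist (y - S i) (tsquare (c i) L)" by (rule infdist_shift)
    then show ?thesis unfolding shifts[OF i_range] by simp
  qed
  have suppI: "\<mu> y \<noteq> 0 \<Longrightarrow> y \<in> supp \<mu>" for y unfolding supp_def
    by (rule closure_subset[THEN subsetD]) simp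
  have KC: "w - (x + S i) \<in> lat2 \<and> ((\<forall>t\<in>Is. \<phi>G t \<in> N) \<or> (\<forall>t\<in>Is. \<phi>H t \<in> N))"
  proof -
    obtain s where s: "s \<in> Is" and hs: "\<mu> (flow UNIV U x 0 (ta i + s)) \<noteq> 0 \<or>
        \<mu> (flow {0..Tstar} (\<lambda>z \<tau>. ustar (z - S i) \<tau>) (x + S i) 0 s) \<noteq> 0" using hyp by blast
    show ?thesis
    proof (cases "\<mu> (flow UNIV U x 0 (ta i + s)) \<noteq> 0")
      case True
      then have "\<mu> (\<phi>G s) \<noteq> 0" unfolding fU \<phi>G_def .
      then have ys: "\<phi>G s \<in> supp \<mu>" by (rule suppI)
      have isG: "is_sol Is (vG (S i)) (\<phi>G s) s \<phi>G" by (rule sol2_is_sol[OF sG s])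
      have inN: "\<phi>G t \<in> N" if t: "t \<in> Is" for t
      proof -
        have "infdist (flow Is (vG (S i)) (\<phi>G s) s t) (tsquare c0 L) < r"
          using small[OF ys s t, of "S i"] by blast
        moreover have "flow Is (vG (S i)) (\<phi>G s) s t = \<phi>G t" by (rule flow_eq[OF II KG(1) KG(2) isG t])
        ultimately show ?thesis by simp
      qed
      have wN: "w \<in> N" using inN[of 0] G0 Tpos by simp
      define p where "p = w - S i"
      have pd: "infdist p (tsquare (c i) L) < L" unfolding p_def shiftd using wN r_pos by simp
      obtain \<phi>P where iP: "is_sol UNIV ybar p 0 \<phi>P" using ybar_exist by blast
      have tai: "ta i \<in> {ta i..tb i}" using tb_eq[of i] Tpos by simp
      have "torus_eq (flow UNIV ybar p 0 (ta i)) (p + S i)" by (rule ybar_flow[OF i_range pd tai])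
      moreover have "flow UNIV ybar p 0 (ta i) = \<phi>P (ta i)" by (rule flow_eq[OF IU Ky(1) Ky(2) iP]) simp
      ultimately have l1: "\<phi>P (ta i) - w \<in> lat2" unfolding torus_eq_def p_def by simp
      define u where "u = w - \<phi>P (ta i)"
      have u: "u \<in> lat2" unfolding u_def using lat2_neg[OF l1] by simp
      have sP: "sol2 UNIV ybar (\<lambda>t. \<phi>P t + u)"
        by (rule sol2_translate'[OF is_sol_sol2[OF iP IU] IU]) (use ybar_per u in \<open>simp add: periodic_fun_def\<close>)
      have "(\<lambda>t. \<phi>P t + u) 0 = \<phi>Y 0"
        by (rule uniq[OF IU Ky(1) Ky(2) sP sY, of "ta i"]) (simp_all add: u_def wY[symmetric] w_def)
      then have "p + u = x" using is_sol_start[OF iP] Y0 by simp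
      then have "w - (x + S i) = - u" unfolding p_def by (simp add: algebra_simps)
      then have "w - (x + S i) \<in> lat2" using lat2_neg[OF u] by simp
      then show ?thesis using inN by blast
    next
      case False
      then have "\<mu> (flow {0..Tstar} (\<lambda>z \<tau>. ustar (z - S i) \<tau>) (x + S i) 0 s) \<noteq> 0" using hs by blast
      then have "\<mu> (\<phi>H s) \<noteq> 0" using fH[OF s] by simp
      then have ys: "\<phi>H s \<in> supp \<mu>" by (rule suppI)
      have isH: "is_sol Is (vH (S i)) (\<phi>H s) s \<phi>H" by (rule sol2_is_sol[OF sH s])
      have inN: "\<phi>H t \<in> N" if t: "t \<in> Is" for t
      proof -
        have "infdist (flow Is (vH (S i)) (\<phi>H s) s t) (tsquare c0 L) < r"
          using small[OF ys s t, of "S i"] by blast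
        moreover have "flow Is (vH (S i)) (\<phi>H s) s t = \<phi>H t" by (rule flow_eq[OF II KH(1) KH(2) isH t])
        ultimately show ?thesis by simp
      qed
      have xN: "x + S i \<in> N" using inN[of 0] H0 Tpos by simp
      have pd: "infdist x (tsquare (c i) L) < L" using shiftd[of "x + S i"] xN r_pos by simp
      have tai: "ta i \<in> {ta i..tb i}" using tb_eq[of i] Tpos by simp
      have "torus_eq (flow UNIV ybar x 0 (ta i)) (x + S i)" by (rule ybar_flow[OF i_range pd tai])
      then have "w - (x + S i) \<in> lat2" unfolding torus_eq_def fY w_def wY .
      then show ?thesis using inN by blast
    qed
  qed
  define v0 where "v0 = w - (x + S i)"
  have v0: "v0 \<in> lat2" using KC unfolding v0_def by blast
  define \<psi> where "\<psi> t = \<phi>H t + v0" for t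
  have s\<psi>: "sol2 Is (vH (S i)) \<psi>" unfolding \<psi>_def
    by (rule sol2_translate'[OF sH II]) (rule vH_per[OF v0])
  have \<psi>0: "\<psi> 0 = \<phi>G 0" unfolding \<psi>_def H0 G0 v0_def by simp
  have eq: "\<phi>G t = \<psi> t" if t: "t \<in> Is" for t
  proof (cases "\<forall>t\<in>Is. \<phi>G t \<in> N")
    case True
    have sG': "sol2 Is (vH (S i)) \<phi>G"
    proof (rule sol2_cong_spike[OF sG II finite.emptyI])
      fix t assume t: "t \<in> Is"
      have "\<phi>G t \<in> N" using True t by blast
      then show "vG (S i) (\<phi>G t) t = vH (S i) (\<phi>G t) t" by (rule loc[OF _ t])
    qed
    have z: "0 \<in> Is" using Tpos by simp
    show ?thesis by (rule uniq[OF II KH(1) KH(2) sG' s\<psi> z \<psi>0[symmetric] t])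
  next
    case False
    then have allH: "\<forall>t\<in>Is. \<phi>H t \<in> N" using KC by blast
    have psiN: "\<psi> t \<in> N" if tt: "t \<in> Is" for t
    proof -
      have "\<phi>H t \<in> N" using allH tt by blast
      then show ?thesis unfolding \<psi>_def using Nper[OF v0] by blast
    qed
    have s\<psi>': "sol2 Is (vG (S i)) \<psi>"
    proof (rule sol2_cong_spike[OF s\<psi> II finite.emptyI])
      fix t assume t: "t \<in> Is"
      have "vG (S i) (\<psi> t) t = vH (S i) (\<psi> t) t" by (rule loc[OF psiN[OF t] t])
      then show "vH (S i) (\<psi> t) t = vG (S i) (\<psi> t) t" by simp
    qed
    have z: "0 \<in> Is" using Tpos by simp
    show ?thesis by (rule uniq[OF II KG(1) KG(2) sG s\<psi>' z \<psi>0[symmetric] t])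
  qed
  show ?thesis
  proof
    fix t assume t: "t \<in> {0..Tstar}"
    have "flow UNIV U x 0 (ta i + t) - flow {0..Tstar} (\<lambda>z \<tau>. ustar (z - S i) \<tau>) (x + S i) 0 t = v0"
      unfolding fU fH[OF t] using eq[OF t] unfolding \<phi>G_def \<psi>_def by simp
    then show "torus_eq (flow UNIV U x 0 (ta i + t)) (flow {0..Tstar} (\<lambda>z \<tau>. ustar (z - S i) \<tau>) (x + S i) 0 t)"
      unfolding torus_eq_def using v0 by simp
  qed
qed

end


theorem lemma3p11:
  fixes \<omega> :: "(real^2) set" and M :: nat and L :: real
    and c :: "nat \<Rightarrow> real^2" and c0 :: "real^2" and S :: "nat \<Rightarrow> real^2"
    and \<mu> :: "real^2 \<Rightarrow> real" and chi :: "real^2 \<Rightarrow> real"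
    and Tstar tc0 :: real and ta tb tc :: "nat \<Rightarrow> real"
    and ybar :: "real^2 \<Rightarrow> real \<Rightarrow> real^2"
    and phistar :: "real^2 \<Rightarrow> real \<Rightarrow> real"
    and ustar U :: "real^2 \<Rightarrow> real \<Rightarrow> real^2"
    and x :: "real^2" and i :: nat
  assumes omega: "open \<omega>" "\<omega> \<noteq> {}" "periodic_set \<omega>"
    and M_pos: "M \<ge> 1"
    and L_pos: "L > 0"
    and cover: "(\<Union>j\<in>{1..M}. tsquare (c j) L) = UNIV"
    and O_in_omega: "closure (tsquare c0 L) \<subseteq> \<omega>"
    and shifts: "\<And>j. j \<in> {1..M} \<Longrightarrow> (\<lambda>y. y + S j) ` tsquare (c j) L = tsquare c0 L"
    and mu_smooth: "smooth_fun \<mu>" and mu_per: "periodic_fun \<mu>"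
    and mu_range: "\<And>y. 0 \<le> \<mu> y \<and> \<mu> y \<le> 1"
    and mu_supp: "supp \<mu> \<subseteq> tsquare c0 L"
    and mu_partition: "\<And>y. (\<Sum>j\<in>{1..M}. \<mu> (y + S j)) = 1"
    and chi_smooth: "smooth_fun chi" and chi_per: "periodic_fun chi"
    and chi_supp: "supp chi \<subseteq> \<omega>"
    and chi_one: "\<exists>V. open V \<and> closure (tsquare c0 L) \<subseteq> V \<and> (\<forall>y\<in>V. chi y = 1)"
    and Tstar_def: "Tstar = 1 / (3 * real M + 2)"
    and tc0: "0 < tc0" "tc0 + 3 * real M * Tstar < 1"
    and ta_def: "\<And>j. ta j = tc0 + (3 * real j - 2) * Tstar"
    and tb_def: "\<And>j. tb j = tc0 + (3 * real j - 1) * Tstar"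
    and tc_def: "\<And>j. tc j = tc0 + 3 * real j * Tstar"
    and ybar_smooth: "smooth_fun (\<lambda>p::(real^2) \<times> real. ybar (fst p) (snd p))"
    and ybar_compact: "\<exists>a b. 0 < a \<and> a \<le> b \<and> b < 1 \<and> (\<forall>y t. t \<notin> {a..b} \<longrightarrow> ybar y t = 0)"
    and ybar_per: "\<And>t. periodic_fun (\<lambda>y. ybar y t)"
    and ybar_div: "\<And>y t. divergence (\<lambda>z. ybar z t) y = 0"
    and ybar_vanish: "\<And>j y t. j \<in> {1..M} \<Longrightarrow> t \<in> {ta j..tb j} \<Longrightarrow> ybar y t = 0"
    and ybar_flow: "\<And>j y t. j \<in> {1..M} \<Longrightarrow> infdist y (tsquare (c j) L) < L \<Longrightarrow>
                      t \<in> {ta j..tb j} \<Longrightarrow> torus_eq (flow UNIV ybar y 0 t) (y + S j)"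
    and ybar_odd: "\<And>j y \<tau>. j \<in> {1..M} \<Longrightarrow> \<bar>\<tau>\<bar> \<le> 3 * Tstar / 2 \<Longrightarrow>
                      ybar y ((tc (j - 1) + tc j) / 2 + \<tau>) = - ybar y ((tc (j - 1) + tc j) / 2 - \<tau>)"
    and phistar_span: "\<exists>a1 a2 a3 a4 :: real \<Rightarrow> real.
                          smooth_fun a1 \<and> smooth_fun a2 \<and> smooth_fun a3 \<and> smooth_fun a4 \<and>
                          (\<forall>y. \<forall>t\<in>{0..Tstar}. phistar y t =
                             a1 t * sin (y $ 1) + a2 t * sin (y $ 2) + a3 t * cos (y $ 1) + a4 t * cos (y $ 2))"
    and ustar_def: "\<And>y t. ustar y t = perp_grad (\<lambda>z. phistar z t) y"
    and ustar_rev: "\<And>y t. t \<in> {0..Tstar} \<Longrightarrow> ustar y (Tstar - t) = - ustar y t"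
    and small: "\<exists>r. 0 < r \<and> r < L \<and>
                  (\<forall>y. infdist y (tsquare c0 L) < r \<longrightarrow> chi y = 1) \<and>
                  (\<forall>S' y s t. y \<in> supp \<mu> \<longrightarrow> s \<in> {0..Tstar} \<longrightarrow> t \<in> {0..Tstar} \<longrightarrow>
                     infdist (flow {0..Tstar} (\<lambda>z \<tau>. perp_grad (\<lambda>w. chi w * phistar (w - S') \<tau>) z) y s t)
                        (tsquare c0 L) < r \<and>
                     infdist (flow {0..Tstar} (\<lambda>z \<tau>. ustar (z - S') \<tau>) y s t) (tsquare c0 L) < r)"
    and U_def: "\<And>y t. U y t = ybar y t +
                  (\<Sum>j\<in>{1..M}. indicator {ta j..tb j} t *\<^sub>R
                      perp_grad (\<lambda>z. chi z * phistar (z - S j) (t - ta j)) y)"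
    and i_range: "i \<in> {1..M}"
    and hyp: "\<exists>s\<in>{0..Tstar}. \<mu> (flow UNIV U x 0 (ta i + s)) \<noteq> 0 \<or>
                              \<mu> (flow {0..Tstar} (\<lambda>z \<tau>. ustar (z - S i) \<tau>) (x + S i) 0 s) \<noteq> 0"
  shows "\<forall>t\<in>{0..Tstar}. torus_eq (flow UNIV U x 0 (ta i + t))
                                  (flow {0..Tstar} (\<lambda>z \<tau>. ustar (z - S i) \<tau>) (x + S i) 0 t)"
proof -
  obtain a1 a2 a3 a4 :: "real \<Rightarrow> real" where as: "smooth_fun a1" "smooth_fun a2" "smooth_fun a3" "smooth_fun a4"
    and sp: "\<forall>y. \<forall>t\<in>{0..Tstar}. phistar y t =
                             a1 t * sin (y $ 1) + a2 t * sin (y $ 2) + a3 t * cos (y $ 1) + a4 t * cos (y $ 2)"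
    using phistar_span by blast
  obtain r where r1: "0 < r" "r < L" and r2: "\<forall>y. infdist y (tsquare c0 L) < r \<longrightarrow> chi y = 1"
    and r3: "\<forall>S' y s t. y \<in> supp \<mu> \<longrightarrow> s \<in> {0..Tstar} \<longrightarrow> t \<in> {0..Tstar} \<longrightarrow>
                     infdist (flow {0..Tstar} (\<lambda>z \<tau>. perp_grad (\<lambda>w. chi w * phistar (w - S') \<tau>) z) y s t)
                        (tsquare c0 L) < r \<and>
                     infdist (flow {0..Tstar} (\<lambda>z \<tau>. ustar (z - S') \<tau>) y s t) (tsquare c0 L) < r"
    using small by blast
  obtain ya yb where y1: "0 < ya" "ya \<le> yb" "yb < 1" and y2: "\<forall>y t. t \<notin> {ya..yb} \<longrightarrow> ybar y t = 0"
    using ybar_compact by blast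
  interpret L3 \<omega> M L c c0 S \<mu> chi Tstar tc0 ta tb tc ybar phistar ustar U a1 a2 a3 a4 r ya yb
  proof (unfold_locales)
    show "M \<ge> 1" by (rule M_pos)
    show "L > 0" by (rule L_pos)
    show "\<And>j. j \<in> {1..M} \<Longrightarrow> (\<lambda>y. y + S j) ` tsquare (c j) L = tsquare c0 L" by (rule shifts)
    show "supp \<mu> \<subseteq> tsquare c0 L" by (rule mu_supp)
    show "smooth_fun chi" by (rule chi_smooth)
    show "periodic_fun chi" by (rule chi_per)
    show "Tstar = 1 / (3 * real M + 2)" by (rule Tstar_def)
    show "0 < tc0" by (rule tc0(1))
    show "tc0 + 3 * real M * Tstar < 1" by (rule tc0(2))
    show "\<And>j. ta j = tc0 + (3 * real j - 2) * Tstar" by (rule ta_def)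
    show "\<And>j. tb j = tc0 + (3 * real j - 1) * Tstar" by (rule tb_def)
    show "\<And>j. tc j = tc0 + 3 * real j * Tstar" by (rule tc_def)
    show "smooth_fun (\<lambda>p::(real^2) \<times> real. ybar (fst p) (snd p))" by (rule ybar_smooth)
    show "0 < ya" "ya \<le> yb" "yb < 1" by (rule y1(1), rule y1(2), rule y1(3))
    show "\<And>y t. t \<notin> {ya..yb} \<Longrightarrow> ybar y t = 0" using y2 by blast
    show "\<And>t. periodic_fun (\<lambda>y. ybar y t)" by (rule ybar_per)
    show "\<And>j y t. j \<in> {1..M} \<Longrightarrow> t \<in> {ta j..tb j} \<Longrightarrow> ybar y t = 0" by (rule ybar_vanish)
    show "\<And>j y t. j \<in> {1..M} \<Longrightarrow> infdist y (tsquare (c j) L) < L \<Longrightarrow>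
                      t \<in> {ta j..tb j} \<Longrightarrow> torus_eq (flow UNIV ybar y 0 t) (y + S j)" by (rule ybar_flow)
    show "\<And>j y \<tau>. j \<in> {1..M} \<Longrightarrow> \<bar>\<tau>\<bar> \<le> 3 * Tstar / 2 \<Longrightarrow>
                      ybar y ((tc (j - 1) + tc j) / 2 + \<tau>) = - ybar y ((tc (j - 1) + tc j) / 2 - \<tau>)" by (rule ybar_odd)
    show "smooth_fun a1" "smooth_fun a2" "smooth_fun a3" "smooth_fun a4" by (rule as(1), rule as(2), rule as(3), rule as(4))
    show "\<And>y t. t \<in> {0..Tstar} \<Longrightarrow> phistar y t =
                             a1 t * sin (y $ 1) + a2 t * sin (y $ 2) + a3 t * cos (y $ 1) + a4 t * cos (y $ 2)"
      using sp by blast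
    show "\<And>y t. ustar y t = perp_grad (\<lambda>z. phistar z t) y" by (rule ustar_def)
    show "\<And>y t. t \<in> {0..Tstar} \<Longrightarrow> ustar y (Tstar - t) = - ustar y t" by (rule ustar_rev)
    show "0 < r" "r < L" by (rule r1(1), rule r1(2))
    show "\<And>y. infdist y (tsquare c0 L) < r \<Longrightarrow> chi y = 1" using r2 by blast
    show "\<And>S' y s t. y \<in> supp \<mu> \<Longrightarrow> s \<in> {0..Tstar} \<Longrightarrow> t \<in> {0..Tstar} \<Longrightarrow>
                     infdist (flow {0..Tstar} (\<lambda>z \<tau>. perp_grad (\<lambda>w. chi w * phistar (w - S') \<tau>) z) y s t)
                        (tsquare c0 L) < r \<and>
                     infdist (flow {0..Tstar} (\<lambda>z \<tau>. ustar (z - S') \<tau>) y s t) (tsquare c0 L) < r"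
      using r3 by blast
    show "\<And>y t. U y t = ybar y t +
                  (\<Sum>j\<in>{1..M}. indicator {ta j..tb j} t *\<^sub>R
                      perp_grad (\<lambda>z. chi z * phistar (z - S j) (t - ta j)) y)" by (rule U_def)
  qed
  show ?thesis by (rule main[OF i_range hyp])
qed

end
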